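(* The circle function $\varphi(M)=\overline{\det}(C_M)/|\overline{\det}(C_M)|$ satisfies: (i) if $M\in\mathcal{G}$ has Cartan decomposition $M=Tu$ with respect to $J$, then $\varphi(M)=\overline{\det}(u)$; in particular $\varphi(\mathbb{1})=1$. In the fermionic case, $\varphi$ is defined only for $M$ with $\det(\mathbb{1}+\Delta_M)\ne 0$. (ii) For $u_1,u_2\in\mathrm{U}(N)$: $\varphi(u_1Mu_2)=\varphi(u_1)\varphi(M)\varphi(u_2)$. (iii) $\varphi(M^{-1})=\varphi(M)^*$.
   Context: Bosonic case: $\mathcal{G}=\mathrm{Sp}(2N,\mathbb{R})$ (preserving $\Omega=\begin{pmatrix}0&\mathbb{1}\\-\mathbb{1}&0\end{pmatrix}$), $J$ a complex structure ($J^2=-\mathbb{1}$) with $J\Omega J^\intercal=\Omega$, $-J\Omega>0$. Fermionic case: $\mathcal{G}=\mathrm{SO}(2N,\mathbb{R})$, $J$ orthogonal with $J^2=-\mathbb{1}$. $\mathfrak{g}$ is the Lie algebra of $\mathcal{G}$, $\mathrm{U}(N)=\{u\in\mathcal{G}:uJ=Ju\}$, $\mathfrak{u}_\perp(N)=\{K\in\mathfrak{g}:KJ=-JK\}$, $\Delta_M=-MJM^{-1}J$, $C_M=\frac12(M-JMJ)$. A Cartan decomposition is $M=Tu$ with $T=e^{K_+}$, $K_+\in\mathfrak{u}_\perp(N)$, $u\in\mathrm{U}(N)$ (in the fermionic case with all eigenvalues of $K_+$ of modulus $<\pi/2$, which is possible and unique precisely when $\det(\mathbb{1}+\Delta_M)\ne0$).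 For $A$ commuting with $J$, $\overline{\det}(A)=\det(A_1+\mathrm{i}A_2)$ where $A=\begin{pmatrix}A_1&A_2\\-A_2&A_1\end{pmatrix}$ in a basis with $J=\begin{pmatrix}0&\mathbb{1}\\-\mathbb{1}&0\end{pmatrix}$. *)

theory Defs
  imports "HOL-Analysis.Analysis"
begin

text \<open>Phase space of dimension 2N is indexed by the type 'n + 'n (CARD('n) = N).
  The first copy ('Inl') and the second copy ('Inr') are the two blocks.\<close>

type_synonym 'n rmat = "real ^ ('n + 'n) ^ ('n + 'n)"

definition Omega :: "'n::finite rmat" where
  "Omega = (\<chi> a b. (case (a, b) of
      (Inl i, Inr j) \<Rightarrow> (if i = j then 1 else 0)
    | (Inr i, Inl j) \<Rightarrow> (if i = j then -1 else 0)
    | _ \<Rightarrow> 0))"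

definition J0 :: "'n::finite rmat" where
  "J0 = Omega"

text \<open>Group G: Sp(2N,R) (bosonic, bos = True) or SO(2N,R) (fermionic, bos = False).\<close>
definition in_G :: "bool \<Rightarrow> 'n::finite rmat \<Rightarrow> bool" where
  "in_G bos M = (if bos then M ** Omega ** transpose M = Omega
                 else transpose M ** M = mat 1 \<and> det M = 1)"

definition in_g :: "bool \<Rightarrow> 'n::finite rmat \<Rightarrow> bool" where
  "in_g bos K = (if bos then K ** Omega + Omega ** transpose K = 0
                 else transpose K = - K)"

definition pos_def :: "'n::finite rmat \<Rightarrow> bool" where
  "pos_def X = (transpose X = X \<and> (\<forall>x. x \<noteq> 0 \<longrightarrow> x \<bullet> (X *v x) > 0))"

definition cplx_str :: "bool \<Rightarrow> 'n::finite rmat \<Rightarrow> bool" where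
  "cplx_str bos J = (J ** J = - mat 1 \<and>
     (if bos then J ** Omega ** transpose J = Omega \<and> pos_def (- (J ** Omega))
      else transpose J ** J = mat 1))"

definition U_N :: "bool \<Rightarrow> 'n::finite rmat \<Rightarrow> 'n rmat set" where
  "U_N bos J = {u. in_G bos u \<and> u ** J = J ** u}"

definition u_perp :: "bool \<Rightarrow> 'n::finite rmat \<Rightarrow> 'n rmat set" where
  "u_perp bos J = {K. in_g bos K \<and> K ** J = - (J ** K)}"

definition Delta :: "'n::finite rmat \<Rightarrow> 'n rmat \<Rightarrow> 'n rmat" where
  "Delta J M = - (M ** J ** matrix_inv M ** J)"

definition C_of :: "'n::finite rmat \<Rightarrow> 'n rmat \<Rightarrow> 'n rmat" where
  "C_of J M = (1/2) *\<^sub>R (M - J ** M ** J)"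

fun mpow :: "'n::finite rmat \<Rightarrow> nat \<Rightarrow> 'n rmat" where
  "mpow K 0 = mat 1"
| "mpow K (Suc n) = K ** mpow K n"

definition mexp :: "'n::finite rmat \<Rightarrow> 'n rmat" where
  "mexp K = (\<Sum>n. (1 / fact n) *\<^sub>R mpow K n)"

definition cmat :: "'n::finite rmat \<Rightarrow> complex ^ ('n + 'n) ^ ('n + 'n)" where
  "cmat K = (\<chi> a b. complex_of_real (K $ a $ b))"

definition is_ceigenvalue :: "'n::finite rmat \<Rightarrow> complex \<Rightarrow> bool" where
  "is_ceigenvalue K l = (\<exists>v. v \<noteq> 0 \<and> cmat K *v v = l *s v)"

text \<open>detbar for A commuting with J0: A = [[A1,A2],[-A2,A1]], detbar A = det(A1 + i A2).\<close>
definition detbar_std :: "'n::finite rmat \<Rightarrow> complex" where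
  "detbar_std A = det (\<chi> i j. complex_of_real (A $ Inl i $ Inl j)
                              + \<i> * complex_of_real (A $ Inl i $ Inr j) :: complex ^ 'n ^ 'n)"

definition detbar :: "'n::finite rmat \<Rightarrow> 'n rmat \<Rightarrow> complex" where
  "detbar J A = (let S = (SOME S :: 'n rmat. invertible S \<and> S ** J ** matrix_inv S = J0)
                 in detbar_std (S ** A ** matrix_inv S))"

definition phi :: "'n::finite rmat \<Rightarrow> 'n rmat \<Rightarrow> complex" where
  "phi J M = detbar J (C_of J M) / complex_of_real (cmod (detbar J (C_of J M)))"

definition phi_defined :: "bool \<Rightarrow> 'n::finite rmat \<Rightarrow> 'n rmat \<Rightarrow> bool" where
  "phi_defined bos J M = (bos \<or> det (mat 1 + Delta J M) \<noteq> 0)"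

end

theory Submission
  imports Defs
begin

lemma minv:
  fixes A :: "real^'m^'m"
  assumes "invertible A"
  shows "A ** matrix_inv A = mat 1" "matrix_inv A ** A = mat 1"
proof -
  have "A ** matrix_inv A = mat 1 \<and> matrix_inv A ** A = mat 1"
    using assms unfolding invertible_def matrix_inv_def by (rule someI_ex)
  then show "A ** matrix_inv A = mat 1" "matrix_inv A ** A = mat 1" by auto
qed

lemma minv_unique:
  fixes A B :: "real^'m^'m"
  assumes "A ** B = mat 1"
  shows "matrix_inv A = B" "invertible A"
proof -
  have BA: "B ** A = mat 1" using assms matrix_left_right_inverse by blast
  show inv: "invertible A" using assms BA invertible_def by blast
  have "matrix_inv A = matrix_inv A ** (A ** B)" using assms by simp
  also have "\<dots> = B" by (simp add: matrix_mul_assoc minv[OF inv])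
  finally show "matrix_inv A = B" .
qed

lemma minv_inv:
  fixes A :: "real^'m^'m"
  assumes "invertible A"
  shows "invertible (matrix_inv A)" "matrix_inv (matrix_inv A) = A"
  using minv_unique[OF minv(2)[OF assms]] by auto

lemma mm_add_r: "((A::'a::semiring_1^'n^'m) + B) ** C = A ** C + B ** C"
  by (vector matrix_matrix_mult_def sum.distrib[symmetric] field_simps)
lemma mm_diff_l: "(A::'a::ring_1^'n^'m) ** (B - C) = A ** B - A ** C"
  by (vector matrix_matrix_mult_def sum_subtractf[symmetric] field_simps)
lemma mm_diff_r: "((A::'a::ring_1^'n^'m) - B) ** C = A ** C - B ** C"
  by (vector matrix_matrix_mult_def sum_subtractf[symmetric] field_simps)
lemma mm_neg_l: "(- (A::'a::ring_1^'n^'m)) ** B = - (A ** B)"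
  by (vector matrix_matrix_mult_def sum_negf[symmetric] field_simps)
lemma mm_neg_r: "(A::'a::ring_1^'n^'m) ** (- B) = - (A ** B)"
  by (vector matrix_matrix_mult_def sum_negf[symmetric] field_simps)
lemma mm_scale_l: "(c *\<^sub>R (A::real^'n^'m)) ** B = c *\<^sub>R (A ** B)"
  by (simp add: scalar_matrix_assoc)
lemma mm_scale_r: "(A::real^'n^'m) ** (c *\<^sub>R B) = c *\<^sub>R (A ** B)"
  by (simp add: matrix_matrix_mult_def sum_distrib_left mult_ac vec_eq_iff scaleR_sum_right)

lemmas mm_simps = mm_add_r matrix_add_ldistrib mm_diff_l mm_diff_r mm_neg_l mm_neg_r mm_scale_l mm_scale_r

lemma transpose_add: "transpose ((A::'a::semiring_1^'n^'m) + B) = transpose A + transpose B"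
  by (vector transpose_def)
lemma transpose_diff: "transpose ((A::'a::ring_1^'n^'m) - B) = transpose A - transpose B"
  by (vector transpose_def)
lemma transpose_neg: "transpose (- (A::'a::ring_1^'n^'m)) = - transpose A"
  by (vector transpose_def)
lemma transpose_scale: "transpose (c *\<^sub>R (A::real^'n^'m)) = c *\<^sub>R transpose A"
  by (vector transpose_def)

lemma sum_UNIV_Plus:
  "sum f (UNIV :: ('a::finite + 'b::finite) set) = (\<Sum>i\<in>UNIV. f (Inl i)) + (\<Sum>i\<in>UNIV. f (Inr i))"
proof -
  have "sum f (UNIV :: ('a + 'b) set) = sum f (UNIV <+> UNIV)" by simp
  also have "\<dots> = sum (f \<circ> Inl) UNIV + sum (f \<circ> Inr) UNIV"
    by (rule sum.Plus) auto
  finally show ?thesis by simp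
qed

lemma Omega_entries:
  "(Omega::'n::finite rmat) $ Inl i $ Inl j = 0"
  "(Omega::'n::finite rmat) $ Inr i $ Inr j = 0"
  "(Omega::'n::finite rmat) $ Inl i $ Inr j = (if i = j then 1 else 0)"
  "(Omega::'n::finite rmat) $ Inr i $ Inl j = (if i = j then -1 else 0)"
  by (simp_all add: Omega_def)

lemma mJ0_entries:
  fixes X :: "'n::finite rmat"
  shows "(X ** J0) $ a $ Inl j = - X $ a $ Inr j"
    "(X ** J0) $ a $ Inr j = X $ a $ Inl j"
    "(J0 ** X) $ Inl i $ b = X $ Inr i $ b"
    "(J0 ** X) $ Inr i $ b = - X $ Inl i $ b"
  by (simp_all add: matrix_matrix_mult_def J0_def sum_UNIV_Plus Omega_entries
      if_distrib if_distribR sum.delta sum.delta' cong: if_cong)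

lemma mat1_entries:
  "(mat 1 :: 'n::finite rmat) $ Inl i $ Inl j = (if i = j then 1 else 0)"
  "(mat 1 :: 'n::finite rmat) $ Inr i $ Inr j = (if i = j then 1 else 0)"
  "(mat 1 :: 'n::finite rmat) $ Inl i $ Inr j = 0"
  "(mat 1 :: 'n::finite rmat) $ Inr i $ Inl j = 0"
  by (simp_all add: mat_def)

lemma J0_J0: "(J0::'n::finite rmat) ** J0 = - mat 1"
proof -
  have "((J0::'n rmat) ** J0) $ a $ b = (- mat 1) $ a $ b" for a b
    by (cases a; cases b; simp add: mJ0_entries; simp add: J0_def Omega_entries mat1_entries)
  then show ?thesis by (simp add: vec_eq_iff)
qed

lemma J0_transpose: "transpose (J0::'n::finite rmat) = - J0"
proof -
  have "(transpose (J0::'n rmat)) $ a $ b = (- J0) $ a $ b" for a b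
    by (cases a; cases b) (auto simp add: transpose_def J0_def Omega_entries)
  then show ?thesis by (simp add: vec_eq_iff)
qed

lemma Omega_J0: "(Omega::'n::finite rmat) = J0" by (simp add: J0_def)

definition comm0 :: "'n::finite rmat \<Rightarrow> bool" where
  "comm0 X \<longleftrightarrow> X ** J0 = J0 ** X"

lemma comm0_iff:
  fixes X :: "'n::finite rmat"
  shows "comm0 X \<longleftrightarrow> (\<forall>i j. X $ Inr i $ Inr j = X $ Inl i $ Inl j \<and> X $ Inr i $ Inl j = - X $ Inl i $ Inr j)"
proof
  assume c: "comm0 X"
  then have e: "(X ** J0) $ a $ b = (J0 ** X) $ a $ b" for a b unfolding comm0_def by simp
  show "\<forall>i j. X $ Inr i $ Inr j = X $ Inl i $ Inl j \<and> X $ Inr i $ Inl j = - X $ Inl i $ Inr j"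
  proof (intro allI conjI)
    fix i j
    show "X $ Inr i $ Inr j = X $ Inl i $ Inl j" using e[of "Inl i" "Inr j"] by (simp add: mJ0_entries)
    show "X $ Inr i $ Inl j = - X $ Inl i $ Inr j" using e[of "Inl i" "Inl j"] by (simp add: mJ0_entries)
  qed
next
  assume h: "\<forall>i j. X $ Inr i $ Inr j = X $ Inl i $ Inl j \<and> X $ Inr i $ Inl j = - X $ Inl i $ Inr j"
  have "(X ** J0) $ a $ b = (J0 ** X) $ a $ b" for a b
    by (cases a; cases b) (simp_all add: mJ0_entries h)
  then show "comm0 X" unfolding comm0_def by (simp add: vec_eq_iff)
qed

definition cpart :: "'n::finite rmat \<Rightarrow> complex^'n^'n" where
  "cpart A = (\<chi> i j. complex_of_real (A $ Inl i $ Inl j) + \<i> * complex_of_real (A $ Inl i $ Inr j))"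

lemma detbar_std_cpart: "detbar_std A = det (cpart A)"
  by (simp add: detbar_std_def cpart_def)

lemma cpart_mult:
  fixes X Y :: "'n::finite rmat"
  assumes "comm0 Y"
  shows "cpart (X ** Y) = cpart X ** cpart Y"
proof -
  have h: "Y $ Inr i $ Inr j = Y $ Inl i $ Inl j" "Y $ Inr i $ Inl j = - Y $ Inl i $ Inr j" for i j
    using assms comm0_iff by blast+
  show ?thesis
    unfolding cpart_def matrix_matrix_mult_def
    by (simp add: vec_eq_iff sum_UNIV_Plus h sum.distrib[symmetric] sum_distrib_left
        complex_eq_iff algebra_simps)
qed

lemma cpart_one: "cpart (mat 1 :: 'n::finite rmat) = mat 1"
  by (simp add: cpart_def vec_eq_iff mat_def)

lemma det_cnj: "det (\<chi> i j. cnj ((B::complex^'n^'n) $ i $ j)) = cnj (det B)"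
  by (simp add: det_def)

lemma cpart_transpose:
  fixes Y :: "'n::finite rmat"
  assumes "comm0 Y"
  shows "det (cpart (transpose Y)) = cnj (det (cpart Y))"
proof -
  have h: "Y $ Inr i $ Inl j = - Y $ Inl i $ Inr j" for i j
    using assms comm0_iff by blast
  have "cpart (transpose Y) = transpose (\<chi> i j. cnj (cpart Y $ i $ j))"
    by (simp add: cpart_def transpose_def vec_eq_iff h complex_eq_iff)
  then show ?thesis by (simp add: det_cnj)
qed

lemma mm_rule: "A ** B = C \<Longrightarrow> A ** (B ** Z) = C ** Z"
  by (metis matrix_mul_assoc)

lemma minv_cancel:
  fixes A :: "real^'m^'m"
  assumes "invertible A"
  shows "matrix_inv A ** (A ** X) = X" "A ** (matrix_inv A ** X) = X"
  by (simp_all add: matrix_mul_assoc minv[OF assms])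

definition Sadm :: "'n::finite rmat \<Rightarrow> 'n rmat \<Rightarrow> bool" where
  "Sadm J S \<longleftrightarrow> invertible S \<and> S ** J ** matrix_inv S = J0"

definition commJ :: "'n::finite rmat \<Rightarrow> 'n rmat \<Rightarrow> bool" where
  "commJ J X \<longleftrightarrow> X ** J = J ** X"

lemma Sadm_I:
  assumes "invertible S" "S ** J = J0 ** S"
  shows "Sadm J S"
proof -
  have "S ** J ** matrix_inv S = J0 ** S ** matrix_inv S" using assms(2) by simp
  also have "\<dots> = J0" by (simp add: matrix_mul_assoc[symmetric] minv[OF assms(1)])
  finally show ?thesis using assms(1) by (simp add: Sadm_def)
qed

lemma Sadm_D:
  assumes "Sadm J S"
  shows "S ** J = J0 ** S" "J ** matrix_inv S = matrix_inv S ** J0" "invertible S"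
proof -
  have inv: "invertible S" and e: "S ** J ** matrix_inv S = J0" using assms by (auto simp: Sadm_def)
  have "S ** J = S ** J ** matrix_inv S ** S" by (simp add: matrix_mul_assoc[symmetric] minv[OF inv])
  also have "\<dots> = J0 ** S" by (simp add: e)
  finally show 1: "S ** J = J0 ** S" .
  have "J ** matrix_inv S = matrix_inv S ** S ** J ** matrix_inv S" by (simp add: minv[OF inv])
  also have "\<dots> = matrix_inv S ** (S ** J ** matrix_inv S)" by (simp add: matrix_mul_assoc)
  also have "\<dots> = matrix_inv S ** J0" by (simp add: e)
  finally show "J ** matrix_inv S = matrix_inv S ** J0" .
  show "invertible S" by fact
qed

lemma Sadm_conj_comm:
  assumes "Sadm J S" "commJ J X"
  shows "comm0 (S ** X ** matrix_inv S)"
proof -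
  note d = Sadm_D[OF assms(1)]
  have "S ** X ** matrix_inv S ** J0 = S ** X ** (matrix_inv S ** J0)" by (simp add: matrix_mul_assoc)
  also have "\<dots> = S ** (X ** J) ** matrix_inv S" by (simp add: d(2)[symmetric] matrix_mul_assoc)
  also have "\<dots> = (S ** J) ** X ** matrix_inv S" using assms(2)
    by (simp add: commJ_def matrix_mul_assoc)
  also have "\<dots> = J0 ** (S ** X ** matrix_inv S)" by (simp add: d(1) matrix_mul_assoc)
  finally show ?thesis by (simp add: comm0_def)
qed

lemma comm0_inv:
  assumes "comm0 R" "invertible R"
  shows "comm0 (matrix_inv R)"
proof -
  have e: "R ** J0 = J0 ** R" using assms(1) by (simp add: comm0_def)
  have "matrix_inv R ** J0 = matrix_inv R ** J0 ** (R ** matrix_inv R)" by (simp add: minv[OF assms(2)])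
  also have "\<dots> = matrix_inv R ** (J0 ** R) ** matrix_inv R" by (simp add: matrix_mul_assoc)
  also have "\<dots> = matrix_inv R ** (R ** J0) ** matrix_inv R" by (simp add: e)
  also have "\<dots> = J0 ** matrix_inv R" by (simp add: matrix_mul_assoc minv[OF assms(2)])
  finally show ?thesis by (simp add: comm0_def)
qed

lemma det_cpart_conj:
  assumes "comm0 R" "invertible R" "comm0 Y"
  shows "det (cpart (R ** Y ** matrix_inv R)) = det (cpart Y)"
proof -
  have ci: "comm0 (matrix_inv R)" by (rule comm0_inv[OF assms(1,2)])
  have "cpart (R ** Y ** matrix_inv R) = cpart R ** cpart Y ** cpart (matrix_inv R)"
    using ci assms(3) by (simp add: cpart_mult)
  then have "det (cpart (R ** Y ** matrix_inv R)) = det (cpart Y) * (det (cpart R) * det (cpart (matrix_inv R)))"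
    by (simp add: det_mul)
  also have "det (cpart R) * det (cpart (matrix_inv R)) = 1"
    using ci by (simp add: det_mul[symmetric] cpart_mult[symmetric] minv[OF assms(2)] cpart_one)
  finally show ?thesis by simp
qed

lemma comm0_mult: "comm0 X \<Longrightarrow> comm0 Y \<Longrightarrow> comm0 (X ** Y)"
  unfolding comm0_def by (metis matrix_mul_assoc)

lemma detbar_indep:
  assumes "Sadm J S1" "Sadm J S2" "commJ J X"
  shows "det (cpart (S1 ** X ** matrix_inv S1)) = det (cpart (S2 ** X ** matrix_inv S2))"
proof -
  note d1 = Sadm_D[OF assms(1)] and d2 = Sadm_D[OF assms(2)]
  define R where "R = S2 ** matrix_inv S1"
  have Ri: "invertible R" unfolding R_def by (intro invertible_mult d2(3) minv_inv(1) d1(3))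
  have "R ** J0 = S2 ** (matrix_inv S1 ** J0)" by (simp add: R_def matrix_mul_assoc)
  also have "\<dots> = (S2 ** J) ** matrix_inv S1" by (simp add: d1(2)[symmetric] matrix_mul_assoc)
  also have "\<dots> = J0 ** R" by (simp add: d2(1) R_def matrix_mul_assoc)
  finally have Rc: "comm0 R" by (simp add: comm0_def)
  have Rinv: "matrix_inv R = S1 ** matrix_inv S2"
  proof (rule minv_unique(1))
    have "R ** (S1 ** matrix_inv S2) = S2 ** (matrix_inv S1 ** S1) ** matrix_inv S2"
      unfolding R_def by (simp add: matrix_mul_assoc)
    then show "R ** (S1 ** matrix_inv S2) = mat 1" by (simp add: minv[OF d1(3)] minv[OF d2(3)])
  qed
  have "R ** (S1 ** X ** matrix_inv S1) ** matrix_inv R = S2 ** (matrix_inv S1 ** S1) ** X ** (matrix_inv S1 ** S1) ** matrix_inv S2"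
    unfolding Rinv unfolding R_def by (simp add: matrix_mul_assoc)
  then have "R ** (S1 ** X ** matrix_inv S1) ** matrix_inv R = S2 ** X ** matrix_inv S2"
    by (simp add: minv[OF d1(3)])
  then show ?thesis
    using det_cpart_conj[OF Rc Ri Sadm_conj_comm[OF assms(1,3)]] by simp
qed

lemma detbar_eq:
  assumes "Sadm J S" "commJ J X"
  shows "detbar J X = det (cpart (S ** X ** matrix_inv S))"
proof -
  let ?S = "SOME S :: 'a rmat. invertible S \<and> S ** J ** matrix_inv S = J0"
  have "Sadm J ?S" using assms(1) unfolding Sadm_def by (rule someI)
  then show ?thesis unfolding detbar_def Let_def detbar_std_cpart
    using detbar_indep[OF _ assms] by blast
qed

lemma commJ_mult: "commJ J X \<Longrightarrow> commJ J Y \<Longrightarrow> commJ J (X ** Y)"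
  unfolding commJ_def by (metis matrix_mul_assoc)

lemma detbar_mult:
  assumes "Sadm J S" "commJ J X" "commJ J Y"
  shows "detbar J (X ** Y) = detbar J X * detbar J Y"
proof -
  note d = Sadm_D[OF assms(1)]
  have "S ** (X ** Y) ** matrix_inv S = (S ** X ** matrix_inv S) ** (S ** Y ** matrix_inv S)"
    by (simp add: matrix_mul_assoc) (simp add: matrix_mul_assoc[symmetric] minv[OF d(3)])
  then show ?thesis
    using detbar_eq[OF assms(1)] commJ_mult[OF assms(2,3)] assms
    by (simp add: cpart_mult[OF Sadm_conj_comm[OF assms(1,3)]] det_mul)
qed

lemma detbar_one:
  assumes "Sadm J S"
  shows "detbar J (mat 1) = 1"
  using detbar_eq[OF assms, of "mat 1"] minv[OF Sadm_D(3)[OF assms]]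
  by (simp add: commJ_def cpart_one)

lemma detbar_adj:
  assumes "Sadm J S" "commJ J X" "invertible G" "transpose J ** G ** J = G" "J ** J = - mat 1"
  shows "commJ J (matrix_inv G ** transpose X ** G)"
    "detbar J (matrix_inv G ** transpose X ** G) = cnj (detbar J X)"
proof -
  note d = Sadm_D[OF assms(1)]
  note Si = d(3) and Gi = assms(3)
  have XJ: "X ** J = J ** X" using assms(2) by (simp add: commJ_def)
  have JtG: "transpose J ** G = - (G ** J)"
  proof -
    have "transpose J ** G = transpose J ** G ** J ** (- J)"
      by (simp add: matrix_mul_assoc[symmetric] mm_neg_r assms(5))
    also have "\<dots> = - (G ** J)" by (simp add: assms(4) mm_neg_r)
    finally show ?thesis .
  qed
  have GiJt: "matrix_inv G ** transpose J = - (J ** matrix_inv G)"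
  proof -
    have "matrix_inv G ** transpose J = matrix_inv G ** (transpose J ** G) ** matrix_inv G"
      by (simp add: matrix_mul_assoc[symmetric] minv[OF Gi])
    also have "\<dots> = - (J ** matrix_inv G)"
      by (simp add: JtG mm_neg_r mm_neg_l matrix_mul_assoc minv[OF Gi])
    finally show ?thesis .
  qed
  have XtJt: "transpose X ** transpose J = transpose J ** transpose X"
    by (simp add: matrix_transpose_mul[symmetric] XJ)
  show cJ: "commJ J (matrix_inv G ** transpose X ** G)"
  proof -
    have "matrix_inv G ** transpose X ** G ** J = - (matrix_inv G ** transpose X ** (transpose J ** G))"
      by (simp add: JtG mm_neg_r matrix_mul_assoc)
    also have "\<dots> = - (matrix_inv G ** (transpose X ** transpose J) ** G)"
      by (simp add: matrix_mul_assoc)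
    also have "\<dots> = - (matrix_inv G ** (transpose J ** transpose X) ** G)"
      by (rule arg_cong[where f="\<lambda>Z. - (matrix_inv G ** Z ** G)"], rule XtJt)
    also have "\<dots> = - (matrix_inv G ** transpose J ** transpose X ** G)"
      by (simp add: matrix_mul_assoc)
    also have "\<dots> = J ** (matrix_inv G ** transpose X ** G)"
      by (simp add: GiJt mm_neg_l matrix_mul_assoc)
    finally show ?thesis by (simp add: commJ_def)
  qed
  define Y where "Y = S ** X ** matrix_inv S"
  define H where "H = transpose (matrix_inv S) ** G ** matrix_inv S"
  have Yc: "comm0 Y" unfolding Y_def by (rule Sadm_conj_comm[OF assms(1,2)])
  have Ytc: "comm0 (transpose Y)"
  proof -
    have "transpose Y ** J0 = - (transpose Y ** transpose J0)" by (simp add: J0_transpose mm_neg_r)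
    also have "\<dots> = - transpose (J0 ** Y)" by (simp add: matrix_transpose_mul)
    also have "\<dots> = - transpose (Y ** J0)" using Yc by (simp add: comm0_def)
    also have "\<dots> = - (transpose J0 ** transpose Y)" by (simp add: matrix_transpose_mul)
    also have "\<dots> = J0 ** transpose Y" by (simp add: J0_transpose mm_neg_l)
    finally show ?thesis by (simp add: comm0_def)
  qed
  have StI: "invertible (transpose S)" by (rule transpose_invertible[OF Si])
  have tinv: "transpose (matrix_inv S) = matrix_inv (transpose S)"
    by (rule minv_unique(1)[symmetric]) (simp add: matrix_transpose_mul[symmetric] minv[OF Si])
  have Hi: "invertible H" unfolding H_def
    by (intro invertible_mult Gi minv_inv(1) Si) (simp add: tinv minv_inv(1)[OF StI])
  have Hinv: "matrix_inv H = S ** matrix_inv G ** transpose S"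
    apply (rule minv_unique(1))
    unfolding H_def tinv
    by (simp add: matrix_mul_assoc) (simp add: matrix_mul_assoc[symmetric] minv[OF Si] minv[OF Gi] minv[OF StI])
  have HJ0: "transpose J0 ** H ** J0 = H"
  proof -
    have t: "transpose J0 ** transpose (matrix_inv S) = transpose (matrix_inv S) ** transpose J"
      by (simp add: matrix_transpose_mul[symmetric] d(2))
    have "transpose J0 ** H ** J0 = (transpose J0 ** transpose (matrix_inv S)) ** G ** (matrix_inv S ** J0)"
      unfolding H_def by (simp add: matrix_mul_assoc)
    also have "\<dots> = (transpose (matrix_inv S) ** transpose J) ** G ** (J ** matrix_inv S)"
      by (simp only: t d(2))
    also have "\<dots> = transpose (matrix_inv S) ** (transpose J ** G ** J) ** matrix_inv S"
      by (simp add: matrix_mul_assoc)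
    finally have "transpose J0 ** H ** J0 = transpose (matrix_inv S) ** (transpose J ** G ** J) ** matrix_inv S" .
    then show ?thesis by (simp add: assms(4) H_def)
  qed
  have Hc: "comm0 H"
  proof -
    have "H ** J0 = J0 ** (transpose J0 ** H ** J0)"
      by (simp add: J0_transpose mm_neg_l mm_neg_r matrix_mul_assoc J0_J0)
    then show ?thesis by (simp add: HJ0 comm0_def)
  qed
  have key: "S ** (matrix_inv G ** transpose X ** G) ** matrix_inv S = matrix_inv H ** transpose Y ** H"
  proof -
    have "matrix_inv H ** transpose Y ** H = S ** matrix_inv G ** (transpose S ** transpose (matrix_inv S)) ** transpose X
      ** (transpose S ** transpose (matrix_inv S)) ** G ** matrix_inv S"
      unfolding Hinv unfolding Y_def H_def by (simp add: matrix_transpose_mul matrix_mul_assoc)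
    also have "\<dots> = S ** (matrix_inv G ** transpose X ** G) ** matrix_inv S"
      by (simp add: tinv minv[OF StI] matrix_mul_assoc)
    finally show ?thesis by simp
  qed
  have "detbar J (matrix_inv G ** transpose X ** G) = det (cpart (matrix_inv H ** transpose Y ** H))"
    using detbar_eq[OF assms(1) cJ] key by simp
  also have "\<dots> = det (cpart (transpose Y))"
    using det_cpart_conj[OF comm0_inv[OF Hc Hi] minv_inv(1)[OF Hi] Ytc] by (simp add: minv_inv(2)[OF Hi])
  also have "\<dots> = cnj (det (cpart Y))" by (rule cpart_transpose[OF Yc])
  also have "\<dots> = cnj (detbar J X)" using detbar_eq[OF assms(1,2)] by (simp add: Y_def)
  finally show "detbar J (matrix_inv G ** transpose X ** G) = cnj (detbar J X)" .
qed

lemma norm_sq_mat: "(norm (A::real^'n::finite^'m::finite))^2 = (\<Sum>i\<in>UNIV. \<Sum>j\<in>UNIV. (A$i$j)^2)"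
  by (subst power2_norm_eq_inner) (simp add: inner_vec_def power2_eq_square)

lemma norm_sq_vec: "(norm (x::real^'n::finite))^2 = (\<Sum>i\<in>UNIV. (x$i)^2)"
  by (subst power2_norm_eq_inner) (simp add: inner_vec_def power2_eq_square)

lemma norm_mm: "norm ((A::real^'k::finite^'m::finite) ** (B::real^'n::finite^'k)) \<le> norm A * norm B"
proof -
  have e: "(A ** B)$i$j = (A$i) \<bullet> (column j B)" for i j
    by (simp add: matrix_matrix_mult_def inner_vec_def column_def)
  have "(norm (A ** B))^2 = (\<Sum>i\<in>UNIV. \<Sum>j\<in>UNIV. ((A$i) \<bullet> (column j B))^2)"
    by (simp add: norm_sq_mat e)
  also have "\<dots> \<le> (\<Sum>i\<in>UNIV. \<Sum>j\<in>UNIV. (norm (A$i))^2 * (norm (column j B))^2)"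
  proof (intro sum_mono)
    fix i j
    have "\<bar>(A$i) \<bullet> (column j B)\<bar> \<le> norm (A$i) * norm (column j B)" by (rule Cauchy_Schwarz_ineq2)
    then have "\<bar>(A$i) \<bullet> (column j B)\<bar>^2 \<le> (norm (A$i) * norm (column j B))^2"
      by (intro power_mono) auto
    then show "((A$i) \<bullet> (column j B))^2 \<le> (norm (A$i))^2 * (norm (column j B))^2"
      by (simp add: power_mult_distrib)
  qed
  also have "\<dots> = (\<Sum>i\<in>UNIV. (norm (A$i))^2) * (\<Sum>j\<in>UNIV. (norm (column j B))^2)"
    by (simp add: sum_product)
  also have "(\<Sum>i\<in>UNIV. (norm (A$i))^2) = (norm A)^2"
    by (simp add: power2_norm_eq_inner inner_vec_def)
  also have "(\<Sum>j\<in>UNIV. (norm (column j B))^2) = (norm B)^2"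
    unfolding norm_sq_mat norm_sq_vec by (simp add: column_def) (rule sum.swap)
  finally have "(norm (A ** B))^2 \<le> (norm A * norm B)^2" by (simp add: power_mult_distrib)
  then show ?thesis
    by (rule power2_le_imp_le) simp
qed

lemma norm_mpow: "norm (mpow (K::'n::finite rmat) n) \<le> norm (mat 1 :: 'n::finite rmat) * norm K ^ n"
proof (induction n)
  case 0 then show ?case by simp
next
  case (Suc n)
  have "norm (mpow K (Suc n)) \<le> norm K * norm (mpow K n)" by (simp add: norm_mm)
  also have "\<dots> \<le> norm K * (norm (mat 1 :: 'n rmat) * norm K ^ n)"
    by (intro mult_left_mono Suc.IH) simp
  finally show ?case by (simp add: algebra_simps)
qed

lemma summable_mexp: "summable (\<lambda>n. (1 / fact n) *\<^sub>R mpow (K::'n::finite rmat) n)"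
proof (rule summable_comparison_test')
  show "summable (\<lambda>n. norm (mat 1 :: 'n rmat) * (norm K ^ n / fact n))"
    using exp_converges[of "norm K"] by (intro summable_mult) (simp add: sums_iff divide_inverse mult.commute)
  fix n
  show "norm ((1 / fact n) *\<^sub>R mpow K n) \<le> norm (mat 1 :: 'n rmat) * (norm K ^ n / fact n)"
    using norm_mpow[of K n] by (simp add: divide_right_mono)
qed

lemma bl_mv: "bounded_linear (\<lambda>X::real^'n::finite^'m::finite. X *v v)"
proof -
  have "linear (\<lambda>X::real^'n^'m. X *v v)"
    by (rule linearI) (simp_all add: vec_eq_iff matrix_vector_mult_def
        scaleR_sum_right sum.distrib[symmetric] distrib_right sum_distrib_left mult.assoc)
  then show ?thesis by (simp add: linear_conv_bounded_linear)
qed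

lemma mv_scale: "((c::real) *\<^sub>R (X::real^'n::finite^'m::finite)) *v v = c *\<^sub>R (X *v v)"
  by (simp add: vec_eq_iff matrix_vector_mult_def scaleR_sum_right mult.assoc sum_distrib_left)

lemma mexp_mv: "mexp K *v v = (\<Sum>n. (1 / fact n) *\<^sub>R (mpow (K::'n::finite rmat) n *v v))"
proof -
  have "mexp K *v v = (\<Sum>n. ((1 / fact n) *\<^sub>R mpow K n) *v v)"
    unfolding mexp_def by (rule bounded_linear.suminf[OF bl_mv summable_mexp])
  also have "\<dots> = (\<Sum>n. (1 / fact n) *\<^sub>R (mpow K n *v v))"
    by (simp only: mv_scale)
  finally show ?thesis .
qed

lemma summable_mexp_mv: "summable (\<lambda>n. (1 / fact n) *\<^sub>R (mpow (K::'n::finite rmat) n *v v))"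
proof -
  have "summable (\<lambda>n. ((1 / fact n) *\<^sub>R mpow K n) *v v)"
    by (rule bounded_linear.summable[OF bl_mv summable_mexp])
  then show ?thesis by (simp only: mv_scale)
qed

lemma mpow_anti:
  assumes "J ** K = - (K ** J)"
  shows "J ** mpow K n = ((-1)^n) *\<^sub>R (mpow K n ** J)"
proof (induction n)
  case 0 then show ?case by simp
next
  case (Suc n)
  have "J ** mpow K (Suc n) = (J ** K) ** mpow K n" by (simp add: matrix_mul_assoc)
  also have "\<dots> = - (K ** (J ** mpow K n))" by (simp add: assms mm_neg_l matrix_mul_assoc)
  also have "\<dots> = ((-1)^(Suc n)) *\<^sub>R (mpow K (Suc n) ** J)"
    by (simp add: Suc.IH mm_scale_r matrix_mul_assoc)
  finally show ?case .
qed

lemma mpow_even: "mpow K (2 * m) = mpow (K ** K) m"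
  by (induction m) (simp_all add: matrix_mul_assoc)

lemma mpow_eig:
  assumes "A *v v = mu *\<^sub>R v"
  shows "mpow A m *v v = (mu ^ m) *\<^sub>R v"
proof (induction m)
  case 0 then show ?case by simp
next
  case (Suc m)
  have "mpow A (Suc m) *v v = A *v (mpow A m *v v)" by (simp add: matrix_vector_mul_assoc)
  also have "\<dots> = (mu ^ Suc m) *\<^sub>R v" by (simp add: Suc.IH matrix_vector_mult_scaleR assms)
  finally show ?case .
qed

definition ccoef :: "real \<Rightarrow> nat \<Rightarrow> real" where
  "ccoef mu n = (if even n then mu ^ (n div 2) / fact n else 0)"

definition ctil :: "real \<Rightarrow> real" where
  "ctil mu = (\<Sum>n. ccoef mu n)"

lemma summable_ccoef: "summable (ccoef mu)"
proof (rule summable_comparison_test')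
  let ?c = "max 1 \<bar>mu\<bar>"
  show "summable (\<lambda>n. ?c ^ n / fact n)"
    using exp_converges[of ?c] by (simp add: sums_iff divide_inverse mult.commute)
  fix n
  show "norm (ccoef mu n) \<le> ?c ^ n / fact n"
  proof (cases "even n")
    case True
    then obtain m where n: "n = 2 * m" by auto
    have "\<bar>mu\<bar> ^ m \<le> ?c ^ m" by (intro power_mono) auto
    also have "\<dots> \<le> ?c ^ m * ?c ^ m" 
      by (intro mult_le_cancel_left1[THEN iffD2] impI) (auto intro: one_le_power)
    finally have "\<bar>mu\<bar> ^ m \<le> ?c ^ n" by (simp add: n power_add[symmetric] mult_2)
    then show ?thesis using True by (simp add: ccoef_def n power_abs divide_right_mono)
  qed (simp add: ccoef_def)
qed

lemma ctil_pos_nonneg: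
  assumes "mu \<ge> 0"
  shows "ctil mu > 0"
proof -
  have "(\<Sum>i<1. ccoef mu i) \<le> ctil mu"
    unfolding ctil_def by (rule sum_le_suminf[OF summable_ccoef]) (auto simp: ccoef_def assms)
  then show ?thesis by (simp add: ccoef_def)
qed

lemma ctil_cos:
  assumes "mu \<le> 0"
  shows "ctil mu = cos (sqrt (- mu))"
proof -
  have "ccoef mu n = cos_coeff n *\<^sub>R (sqrt (- mu)) ^ n" for n
  proof (cases "even n")
    case True
    then obtain m where n: "n = 2 * m" by auto
    have "(sqrt (- mu)) ^ n = (- mu) ^ m" using assms by (simp add: n power_mult)
    then show ?thesis using True by (simp add: ccoef_def cos_coeff_def n power_minus')
  qed (simp add: ccoef_def cos_coeff_def)
  then show ?thesis using cos_converges[of "sqrt (- mu)"] by (simp add: ctil_def sums_iff)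
qed

lemma mv_neg: "(- (X::real^'n::finite^'m::finite)) *v v = - (X *v v)"
  by (simp add: vec_eq_iff matrix_vector_mult_def sum_negf)

lemma C_eig:
  fixes J K :: "'n::finite rmat"
  assumes JK: "J ** K = - (K ** J)" and JJ: "J ** J = - mat 1" and ev: "(K ** K) *v v = mu *\<^sub>R v"
  shows "C_of J (mexp K) *v v = ctil mu *\<^sub>R v"
proof -
  let ?T = "mexp K"
  define a where "a n = (1 / fact n) *\<^sub>R (mpow K n *v v)" for n
  define b where "b n = (1 / fact n) *\<^sub>R (mpow K n *v (J *v v))" for n
  have sa: "summable a" unfolding a_def by (rule summable_mexp_mv)
  have sb: "summable b" unfolding b_def by (rule summable_mexp_mv)
  have Jb: "J *v b n = (- ((-1)^n)) *\<^sub>R a n" for n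
  proof -
    have "J *v b n = (1 / fact n) *\<^sub>R ((J ** mpow K n ** J) *v v)"
      by (simp add: b_def matrix_vector_mult_scaleR matrix_vector_mul_assoc matrix_mul_assoc)
    also have "J ** mpow K n ** J = - (((-1)^n) *\<^sub>R mpow K n)"
      by (simp add: mpow_anti[OF JK] mm_scale_l matrix_mul_assoc[symmetric] JJ mm_neg_r)
    finally show ?thesis by (simp add: a_def mv_scale mv_neg matrix_vector_mult_scaleR)
  qed
  have sJb: "summable (\<lambda>n. J *v b n)"
    by (rule bounded_linear.summable[OF matrix_vector_mul_bounded_linear sb])
  have s2: "summable (\<lambda>n. (- ((-1)^n)) *\<^sub>R a n)" using sJb by (simp only: Jb)
  have Tv: "?T *v v = suminf a" unfolding a_def by (rule mexp_mv)
  have JTJv: "J *v (?T *v (J *v v)) = (\<Sum>n. (- ((-1)^n)) *\<^sub>R a n)"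
  proof -
    have "?T *v (J *v v) = suminf b" unfolding b_def by (rule mexp_mv)
    then have "J *v (?T *v (J *v v)) = (\<Sum>n. J *v b n)"
      using bounded_linear.suminf[OF matrix_vector_mul_bounded_linear sb] by simp
    then show ?thesis by (simp only: Jb)
  qed
  have "C_of J ?T *v v = (1/2) *\<^sub>R (?T *v v - J *v (?T *v (J *v v)))"
    by (simp add: C_of_def mv_scale matrix_vector_mult_diff_rdistrib matrix_vector_mul_assoc matrix_mul_assoc)
  also have "\<dots> = (1/2) *\<^sub>R (\<Sum>n. a n - (- ((-1)^n)) *\<^sub>R a n)"
    by (simp only: Tv JTJv suminf_diff[OF sa s2])
  also have "\<dots> = (\<Sum>n. (1/2) *\<^sub>R (a n - (- ((-1)^n)) *\<^sub>R a n))"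
    by (rule suminf_scaleR_right) (intro summable_diff sa s2)
  also have "\<dots> = (\<Sum>n. ccoef mu n *\<^sub>R v)"
  proof (rule arg_cong[where f = suminf], rule ext)
    fix n
    show "(1/2) *\<^sub>R (a n - (- ((-1)^n)) *\<^sub>R a n) = ccoef mu n *\<^sub>R v"
    proof (cases "even n")
      case True
      then obtain m where n: "n = 2 * m" by auto
      have "mpow K n *v v = (mu ^ m) *\<^sub>R v" by (simp add: n mpow_even mpow_eig[OF ev])
      moreover have "(-1::real)^n = 1" using True by simp
      ultimately have "(1/2) *\<^sub>R (a n - (- ((-1)^n)) *\<^sub>R a n) = a n"
        by (simp add: scaleR_2[symmetric])
      then show ?thesis using True \<open>mpow K n *v v = (mu ^ m) *\<^sub>R v\<close>
        by (simp add: a_def ccoef_def n)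
    next
      case False
      then show ?thesis by (simp add: ccoef_def)
    qed
  qed
  also have "\<dots> = ctil mu *\<^sub>R v"
    unfolding ctil_def by (rule suminf_scaleR_left[symmetric, OF summable_ccoef])
  finally show ?thesis .
qed

lemma dot_mv: "(x::real^'n::finite) \<bullet> (M *v y) = (transpose M *v x) \<bullet> y"
  by (simp add: dot_lmul_matrix[symmetric])

lemma dot_mv2: "(M *v (x::real^'n::finite)) \<bullet> y = x \<bullet> (transpose M *v y)"
  using dot_mv[of x "transpose M" y] by simp

lemma mv_neg_right: "(M::real^'n::finite^'m::finite) *v (- x) = - (M *v x)"
  by (simp add: vec_eq_iff matrix_vector_mult_def sum_negf)

lemma continuous_on_mv [continuous_intros]:
  "continuous_on S f \<Longrightarrow> continuous_on S (\<lambda>x. (M::real^'n::finite^'m::finite) *v f x)"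
  by (rule bounded_linear.continuous_on[OF matrix_vector_mul_bounded_linear])

locale adapted =
  fixes G J A :: "'n::finite rmat"
  assumes Gsym: "transpose G = G"
  and Gpos: "\<And>x. x \<noteq> 0 \<Longrightarrow> x \<bullet> (G *v x) > 0"
  and JJ: "J ** J = - mat 1"
  and JGJ: "transpose J ** G ** J = G"
  and AG: "transpose A ** G = G ** A"
  and AJ: "A ** J = J ** A"
begin

definition g :: "real^('n+'n) \<Rightarrow> real^('n+'n) \<Rightarrow> real" where
  "g x y = x \<bullet> (G *v y)"

lemma g_sym: "g x y = g y x"
  unfolding g_def by (subst dot_mv) (simp add: Gsym inner_commute)

lemma g_add_left: "g (x + y) z = g x z + g y z"
  by (simp add: g_def inner_add_left)
lemma g_add_right: "g x (y + z) = g x y + g x z"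
  by (simp add: g_def inner_add_right matrix_vector_right_distrib)
lemma g_diff_left: "g (x - y) z = g x z - g y z"
  by (simp add: g_def inner_diff_left)
lemma g_diff_right: "g x (y - z) = g x y - g x z"
  by (simp add: g_def inner_diff_right matrix_vector_mult_diff_distrib)
lemma g_scale_left: "g (c *\<^sub>R x) z = c * g x z"
  by (simp add: g_def)
lemma g_scale_right: "g x (c *\<^sub>R z) = c * g x z"
  by (simp add: g_def matrix_vector_mult_scaleR)
lemma g_zero_left [simp]: "g 0 z = 0" by (simp add: g_def)
lemma g_zero_right [simp]: "g z 0 = 0" by (simp add: g_def)

lemmas g_lin = g_add_left g_add_right g_diff_left g_diff_right g_scale_left g_scale_right

lemma g_pos: "x \<noteq> 0 \<Longrightarrow> g x x > 0" unfolding g_def by (rule Gpos)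
lemma g_nonneg: "g x x \<ge> 0" using g_pos[of x] by (cases "x = 0") auto
lemma g_zero_iff: "g x x = 0 \<longleftrightarrow> x = 0" using g_pos[of x] by (cases "x = 0") auto

lemma g_J: "g (J *v x) (J *v y) = g x y"
proof -
  have "g (J *v x) (J *v y) = x \<bullet> ((transpose J ** G ** J) *v y)"
    unfolding g_def by (subst dot_mv2) (simp add: matrix_vector_mul_assoc matrix_mul_assoc)
  then show ?thesis by (simp add: JGJ g_def)
qed

lemma JJv: "J *v (J *v x) = - x"
  by (simp add: matrix_vector_mul_assoc JJ mv_neg)

lemma g_J2: "g x (J *v y) = - g (J *v x) y"
proof -
  have "g x (J *v y) = g (J *v (J *v (- x))) (J *v y)" by (simp add: JJv)
  also have "\<dots> = g (J *v (- x)) y" by (rule g_J)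
  also have "\<dots> = - g (J *v x) y" by (simp add: mv_neg_right g_def)
  finally show ?thesis .
qed

lemma g_xJx: "g x (J *v x) = 0"
  using g_J2[of x x] g_sym[of x "J *v x"] by simp

lemma g_A: "g x (A *v y) = g (A *v x) y"
proof -
  have "g x (A *v y) = x \<bullet> ((transpose A ** G) *v y)"
    unfolding g_def by (simp add: AG matrix_vector_mul_assoc)
  then show ?thesis unfolding g_def by (subst dot_mv2) (simp add: matrix_vector_mul_assoc)
qed

lemma AJv: "A *v (J *v x) = J *v (A *v x)"
  by (simp add: matrix_vector_mul_assoc AJ)

lemma exists_eig:
  assumes W: "subspace W" and AW: "\<And>x. x \<in> W \<Longrightarrow> A *v x \<in> W" and ne: "x0 \<in> W" "x0 \<noteq> 0"
  shows "\<exists>x\<in>W. x \<noteq> 0 \<and> (\<exists>mu. A *v x = mu *\<^sub>R x)"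
proof -
  define S where "S = W \<inter> sphere 0 1"
  define f where "f x = g x (A *v x) / g x x" for x
  have cS: "compact S" unfolding S_def
    by (intro closed_Int_compact closed_subspace W compact_sphere)
  have x0S: "(1 / norm x0) *\<^sub>R x0 \<in> S"
    using ne W by (simp add: S_def subspace_scale)
  have cf: "continuous_on S f"
    unfolding f_def g_def
    apply (intro continuous_intros)
    apply (clarsimp simp: S_def)
    by (metis Gpos norm_zero less_irrefl zero_neq_one)
  obtain x1 where x1S: "x1 \<in> S" and x1min: "\<And>y. y \<in> S \<Longrightarrow> f x1 \<le> f y"
    using continuous_attains_inf[OF cS _ cf] x0S by blast
  define m where "m = f x1"
  have x1W: "x1 \<in> W" and x1nz: "x1 \<noteq> 0" using x1S by (auto simp: S_def)
  have q1: "g x1 (A *v x1) - m * g x1 x1 = 0"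
    using g_pos[OF x1nz] by (simp add: m_def f_def)
  have qnn: "g y (A *v y) - m * g y y \<ge> 0" if yW: "y \<in> W" for y
  proof (cases "y = 0")
    case True then show ?thesis by simp
  next
    case False
    let ?y = "(1 / norm y) *\<^sub>R y"
    have "?y \<in> S" using yW False W by (simp add: S_def subspace_scale)
    then have "m \<le> f ?y" using x1min by (simp add: m_def)
    also have "f ?y = f y" using False
      by (simp add: f_def g_lin matrix_vector_mult_scaleR)
    finally have "m * g y y \<le> g y (A *v y)"
      using g_pos[OF False] by (simp add: f_def pos_le_divide_eq)
    then show ?thesis by simp
  qed
  define z where "z = A *v x1 - m *\<^sub>R x1"
  have zW: "z \<in> W" unfolding z_def using x1W AW W by (simp add: subspace_diff subspace_scale)
  have exp: "g (x1 + t *\<^sub>R z) (A *v (x1 + t *\<^sub>R z)) - m * g (x1 + t *\<^sub>R z) (x1 + t *\<^sub>R z)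
      = 2 * t * g z z + t^2 * (g z (A *v z) - m * g z z)" for t
  proof -
    have s1: "g x1 (A *v z) = g z (A *v x1)" using g_A[of x1 z] g_sym by simp
    have s2: "g x1 z = g z x1" by (rule g_sym)
    have s3: "g z z = g z (A *v x1) - m * g z x1" unfolding z_def
      by (simp only: g_lin)
    have s4: "g z (A *v x1) = g z z + m * g z x1" using s3 by simp
    show ?thesis
      using q1 s1 s2 s4
      by (simp add: g_lin matrix_vector_right_distrib matrix_vector_mult_scaleR power2_eq_square
          algebra_simps)
  qed
  have zz: "g z z = 0"
  proof (rule ccontr)
    assume c: "g z z \<noteq> 0"
    define Q where "Q = g z (A *v z) - m * g z z"
    have Q0: "Q \<ge> 0" unfolding Q_def by (rule qnn[OF zW])
    define t where "t = - g z z / (Q + 1)"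
    have "x1 + t *\<^sub>R z \<in> W" using x1W zW W by (simp add: subspace_add subspace_scale)
    then have "0 \<le> 2 * t * g z z + t^2 * Q" using qnn exp Q_def by metis
    also have "2 * t * g z z + t^2 * Q = (g z z)^2 * (- Q - 2) / (Q + 1)^2"
    proof -
      have Qp: "Q + 1 \<noteq> 0" using Q0 by linarith
      show ?thesis unfolding t_def using Qp
        by (simp add: divide_simps power2_eq_square) (simp add: algebra_simps)
    qed
    also have "\<dots> < 0"
      using c Q0 by (intro divide_neg_pos mult_pos_neg) auto
    finally show False by simp
  qed
  then have "z = 0" by (simp add: g_zero_iff)
  then show ?thesis using x1W x1nz by (auto simp: z_def)
qed

lemma spectral_W:
  "subspace W \<Longrightarrow> (\<forall>x\<in>W. J *v x \<in> W) \<Longrightarrow> (\<forall>x\<in>W. A *v x \<in> W) \<Longrightarrow>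
   \<exists>B. finite B \<and> B \<subseteq> W \<and> (\<forall>v\<in>B. \<exists>mu. A *v v = mu *\<^sub>R v) \<and>
       (\<forall>v\<in>B. \<forall>w\<in>B. g v w = (if v = w then 1 else 0) \<and> g v (J *v w) = 0) \<and>
       W \<subseteq> span (B \<union> (\<lambda>v. J *v v) ` B)"
proof (induction "dim W" arbitrary: W rule: less_induct)
  case less
  note W = less.prems(1) and JW = less.prems(2) and AW = less.prems(3)
  show ?case
  proof (cases "\<exists>x\<in>W. x \<noteq> 0")
    case False
    then have "W \<subseteq> span ({} \<union> (\<lambda>v. J *v v) ` {})" by auto
    then show ?thesis by (intro exI[of _ "{}"]) auto
  next
    case True
    then obtain x' where "x' \<in> W" "x' \<noteq> 0" by blast
    from exists_eig[OF W _ this] AW obtain x1 mu where x1W: "x1 \<in> W" and x1nz: "x1 \<noteq> 0"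
      and x1e: "A *v x1 = mu *\<^sub>R x1" by blast
    define x0 where "x0 = (1 / sqrt (g x1 x1)) *\<^sub>R x1"
    have gp: "g x1 x1 > 0" by (rule g_pos[OF x1nz])
    have x0W: "x0 \<in> W" unfolding x0_def using x1W W by (simp add: subspace_scale)
    have x00: "g x0 x0 = 1" unfolding x0_def using gp
      by (simp add: g_lin power2_eq_square[symmetric] real_sqrt_pow2)
    have x0e: "A *v x0 = mu *\<^sub>R x0" unfolding x0_def by (simp add: matrix_vector_mult_scaleR x1e)
    have x0J: "g x0 (J *v x0) = 0" by (rule g_xJx)
    have Jx0J: "g (J *v x0) (J *v x0) = 1" by (simp add: g_J x00)
    have Jx0x0: "g (J *v x0) x0 = 0" using x0J g_sym by metis
    define W' where "W' = {y \<in> W. g y x0 = 0 \<and> g y (J *v x0) = 0}"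
    have W'W: "W' \<subseteq> W" by (auto simp: W'_def)
    have sW': "subspace W'"
      unfolding subspace_def W'_def using W
      by (auto simp: subspace_add subspace_scale subspace_0 g_lin)
    have JW': "\<forall>x\<in>W'. J *v x \<in> W'"
    proof
      fix y assume y: "y \<in> W'"
      have "g (J *v y) x0 = - g (J *v x0) y" using g_J2[of x0 y] g_sym by metis
      also have "\<dots> = 0" using y g_sym by (auto simp: W'_def)
      finally have 1: "g (J *v y) x0 = 0" .
      have 2: "g (J *v y) (J *v x0) = 0" using y by (simp add: g_J W'_def)
      show "J *v y \<in> W'" using y JW 1 2 by (auto simp: W'_def)
    qed
    have AW': "\<forall>x\<in>W'. A *v x \<in> W'"
    proof
      fix y assume y: "y \<in> W'"
      have 1: "g (A *v y) x0 = 0" using y by (simp add: g_A[symmetric] x0e g_lin W'_def)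
      have 2: "g (A *v y) (J *v x0) = 0" using y by (simp add: g_A[symmetric] AJv x0e g_lin
            matrix_vector_mult_scaleR W'_def)
      show "A *v y \<in> W'" using y AW 1 2 by (auto simp: W'_def)
    qed
    have "dim W' < dim W"
    proof (rule dim_psubset)
      have "x0 \<notin> W'" using x00 by (auto simp: W'_def)
      moreover have "span W' = W'" by (rule span_eq_iff[THEN iffD2, OF sW'])
      moreover have "span W = W" by (rule span_eq_iff[THEN iffD2, OF W])
      moreover have "W' \<subset> W" using W'W x0W \<open>x0 \<notin> W'\<close> by auto
      ultimately show "span W' \<subset> span W" by (simp only:)
    qed
    from less.hyps[OF this sW' JW' AW'] obtain B' where B': "finite B'" "B' \<subseteq> W'"
      "\<forall>v\<in>B'. \<exists>mu. A *v v = mu *\<^sub>R v"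
      "\<forall>v\<in>B'. \<forall>w\<in>B'. g v w = (if v = w then 1 else 0) \<and> g v (J *v w) = 0"
      "W' \<subseteq> span (B' \<union> (\<lambda>v. J *v v) ` B')" by blast
    define B where "B = insert x0 B'"
    have orth1: "g v x0 = 0" "g x0 v = 0" "g v (J *v x0) = 0" "g x0 (J *v v) = 0" if "v \<in> B'" for v
    proof -
      show a: "g v x0 = 0" "g v (J *v x0) = 0" using that B'(2) by (auto simp: W'_def)
      show "g x0 v = 0" using a g_sym by metis
      have "g x0 (J *v v) = - g (J *v x0) v" by (rule g_J2)
      then show "g x0 (J *v v) = 0" using a g_sym[of "J *v x0" v] by simp
    qed
    have nx0: "x0 \<notin> B'" using orth1(1) x00 by fastforce
    have "finite B" using B'(1) by (simp add: B_def)
    moreover have "B \<subseteq> W" using B'(2) W'W x0W by (auto simp: B_def)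
    moreover have "\<forall>v\<in>B. \<exists>mu. A *v v = mu *\<^sub>R v" using B'(3) x0e by (auto simp: B_def)
    moreover have "\<forall>v\<in>B. \<forall>w\<in>B. g v w = (if v = w then 1 else 0) \<and> g v (J *v w) = 0"
      using B'(4) orth1 nx0 x00 x0J unfolding B_def by auto
    moreover have "W \<subseteq> span (B \<union> (\<lambda>v. J *v v) ` B)"
    proof
      fix y assume yW: "y \<in> W"
      define y' where "y' = y - g y x0 *\<^sub>R x0 - g y (J *v x0) *\<^sub>R (J *v x0)"
      have "y' \<in> W" unfolding y'_def using yW x0W JW W by (simp add: subspace_diff subspace_scale)
      moreover have "g y' x0 = 0" unfolding y'_def by (simp add: g_lin x00 Jx0x0)
      moreover have "g y' (J *v x0) = 0" unfolding y'_def by (simp add: g_lin Jx0J x0J)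
      ultimately have "y' \<in> W'" by (simp add: W'_def)
      then have "y' \<in> span (B' \<union> (\<lambda>v. J *v v) ` B')" using B'(5) by blast
      also have "\<dots> \<subseteq> span (B \<union> (\<lambda>v. J *v v) ` B)" by (intro span_mono) (auto simp: B_def)
      finally have 1: "y' \<in> span (B \<union> (\<lambda>v. J *v v) ` B)" .
      have 2: "x0 \<in> span (B \<union> (\<lambda>v. J *v v) ` B)" by (intro span_base) (simp add: B_def)
      have 3: "J *v x0 \<in> span (B \<union> (\<lambda>v. J *v v) ` B)" by (intro span_base) (simp add: B_def)
      have "y = y' + g y x0 *\<^sub>R x0 + g y (J *v x0) *\<^sub>R (J *v x0)" by (simp add: y'_def)
      then show "y \<in> span (B \<union> (\<lambda>v. J *v v) ` B)"
        using 1 2 3 by (metis span_add span_scale)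
    qed
    ultimately show ?thesis by blast
  qed
qed

lemma adapted_frame:
  "\<exists>f :: 'n \<Rightarrow> real^('n+'n). (\<forall>j. \<exists>mu. A *v f j = mu *\<^sub>R f j) \<and>
     (\<forall>i j. g (f i) (f j) = (if i = j then 1 else 0) \<and> g (f i) (J *v f j) = 0)"
proof -
  obtain B where B: "finite B" "(\<forall>v\<in>B. \<exists>mu. A *v v = mu *\<^sub>R v)"
    "\<forall>v\<in>B. \<forall>w\<in>B. g v w = (if v = w then 1 else 0) \<and> g v (J *v w) = 0"
    "UNIV \<subseteq> span (B \<union> (\<lambda>v. J *v v) ` B)"
    using spectral_W[of UNIV] by auto
  let ?E = "B \<union> (\<lambda>v. J *v v) ` B"
  have "dim (UNIV :: (real^('n+'n)) set) \<le> card ?E"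
    by (rule span_card_ge_dim) (use B in auto)
  also have "card ?E \<le> card B + card ((\<lambda>v. J *v v) ` B)" by (rule card_Un_le)
  also have "card ((\<lambda>v. J *v v) ` B) \<le> card B" by (rule card_image_le[OF B(1)])
  finally have "2 * CARD('n) \<le> 2 * card B" by simp
  then have "card (UNIV :: 'n set) \<le> card B" by simp
  then have "\<exists>f. f ` (UNIV::'n set) \<subseteq> B \<and> inj_on f UNIV"
    using card_le_inj[of "UNIV::'n set" B] B(1) by simp
  then obtain f where f: "f ` UNIV \<subseteq> B" "inj_on f (UNIV::'n set)" by blast
  have "\<forall>j. \<exists>mu. A *v f j = mu *\<^sub>R f j" using f B(2) by auto
  moreover have "\<forall>i j. g (f i) (f j) = (if i = j then 1 else 0) \<and> g (f i) (J *v f j) = 0"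
  proof (intro allI)
    fix i j
    have fB: "f i \<in> B" "f j \<in> B" using f(1) by auto
    have h: "g (f i) (f j) = (if f i = f j then 1 else 0) \<and> g (f i) (J *v f j) = 0"
      using B(3) fB by blast
    moreover have "(f i = f j) = (i = j)" using f(2) by (auto simp: inj_on_def)
    ultimately show "g (f i) (f j) = (if i = j then 1 else 0) \<and> g (f i) (J *v f j) = 0" by simp
  qed
  ultimately show ?thesis by blast
qed

end

definition pcol :: "'n::finite rmat \<Rightarrow> ('n \<Rightarrow> real^('n+'n)) \<Rightarrow> 'n + 'n \<Rightarrow> real^('n+'n)" where
  "pcol J f c = (case c of Inl j \<Rightarrow> J *v f j | Inr j \<Rightarrow> f j)"

definition pmat :: "'n::finite rmat \<Rightarrow> ('n \<Rightarrow> real^('n+'n)) \<Rightarrow> 'n rmat" where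
  "pmat J f = (\<chi> i c. pcol J f c $ i)"

lemma mm_cols: "((M::real^'k::finite^'m::finite) ** (\<chi> i c. h c $ i)) $ i $ c = (M *v h c) $ i"
  by (simp add: matrix_matrix_mult_def matrix_vector_mult_def)

lemma mat_eq_cols:
  fixes X Y :: "real^'k::finite^'m::finite"
  assumes "\<And>c. column c X = column c Y"
  shows "X = Y"
  using assms by (simp add: vec_eq_iff column_def)

lemma column_mm: "column c ((M::real^'k::finite^'m::finite) ** X) = M *v column c X"
  by (simp add: vec_eq_iff column_def matrix_matrix_mult_def matrix_vector_mult_def)

lemma column_pmat: "column c (pmat J f) = pcol J f c"
  by (simp add: vec_eq_iff column_def pmat_def)

lemma column_J0:
  fixes X :: "'n::finite rmat"
  shows "column (Inl j) (X ** J0) = - column (Inr j) X" "column (Inr j) (X ** J0) = column (Inl j) X"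
  by (simp_all add: vec_eq_iff column_def mJ0_entries)

lemma column_diag:
  fixes X :: "'n::finite rmat"
  shows "column c (X ** (\<chi> a b. if a = b then d a else 0)) = d c *\<^sub>R column c X"
  by (simp add: vec_eq_iff column_def matrix_matrix_mult_def if_distrib if_distribR sum.delta' cong: if_cong)

context adapted
begin

lemma pmat_J:
  "J ** pmat J f = pmat J f ** J0"
proof (rule mat_eq_cols)
  fix c
  have l: "column c (J ** pmat J f) = J *v pcol J f c" by (simp add: column_mm column_pmat)
  have r: "column c (pmat J f ** J0) = J *v pcol J f c"
    by (cases c) (simp_all add: column_pmat column_J0 pcol_def JJv)
  show "column c (J ** pmat J f) = column c (pmat J f ** J0)" using l r by simp
qed

lemma pmat_orth:
  assumes orth: "\<forall>i j. g (f i) (f j) = (if i = j then 1 else 0) \<and> g (f i) (J *v f j) = 0"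
  shows "transpose (pmat J f) ** G ** pmat J f = mat 1"
proof -
  have e: "(transpose (pmat J f) ** G ** pmat J f) $ a $ b = g (pcol J f a) (pcol J f b)" for a b
    by (simp add: g_def matrix_matrix_mult_def matrix_vector_mult_def transpose_def pmat_def
        inner_vec_def sum_distrib_left sum_distrib_right mult.assoc) (rule sum.swap)
  have "g (pcol J f a) (pcol J f b) = (mat 1 :: 'n rmat) $ a $ b" for a b
  proof (cases a; cases b)
    fix i j assume ab: "a = Inl i" "b = Inl j"
    then show ?thesis using orth by (simp add: pcol_def g_J mat_def)
  next
    fix i j assume ab: "a = Inl i" "b = Inr j"
    then show ?thesis using orth g_sym[of "J *v f i" "f j"] by (simp add: pcol_def mat_def)
  next
    fix i j assume ab: "a = Inr i" "b = Inl j"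
    then show ?thesis using orth by (simp add: pcol_def mat_def)
  next
    fix i j assume ab: "a = Inr i" "b = Inr j"
    then show ?thesis using orth by (simp add: pcol_def mat_def)
  qed
  then show ?thesis using e by (simp add: vec_eq_iff)
qed

lemma pmat_inv:
  assumes orth: "\<forall>i j. g (f i) (f j) = (if i = j then 1 else 0) \<and> g (f i) (J *v f j) = 0"
  shows "invertible (pmat J f)" "Sadm J (matrix_inv (pmat J f))"
proof -
  show inv: "invertible (pmat J f)"
    using pmat_orth[OF orth] invertible_left_inverse by blast
  let ?P = "pmat J f"
  have "matrix_inv ?P ** J = matrix_inv ?P ** J ** (?P ** matrix_inv ?P)" by (simp add: minv[OF inv])
  also have "\<dots> = matrix_inv ?P ** (J ** ?P) ** matrix_inv ?P" by (simp add: matrix_mul_assoc)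
  also have "\<dots> = matrix_inv ?P ** ?P ** J0 ** matrix_inv ?P" by (simp add: pmat_J matrix_mul_assoc)
  also have "\<dots> = J0 ** matrix_inv ?P" by (simp add: minv[OF inv])
  finally show "Sadm J (matrix_inv ?P)"
    by (intro Sadm_I minv_inv(1)[OF inv])
qed

lemma ex_Sadm: "\<exists>S. Sadm J S"
  using adapted_frame pmat_inv(2) by blast

end

lemma Omega_Omega: "(Omega::'n::finite rmat) ** Omega = - mat 1"
  by (simp add: Omega_J0 J0_J0)
lemma Omega_transpose: "transpose (Omega::'n::finite rmat) = - Omega"
  by (simp add: Omega_J0 J0_transpose)

definition Gof :: "bool \<Rightarrow> 'n::finite rmat \<Rightarrow> 'n rmat" where
  "Gof bos J = (if bos then - (Omega ** J) else mat 1)"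

lemma inv_from_right:
  fixes A B :: "real^'m^'m"
  assumes "A ** B = mat 1"
  shows "B ** A = mat 1"
  using assms matrix_left_right_inverse by blast

lemma bos_JtOJ:
  fixes J :: "'n::finite rmat"
  assumes JJ: "J ** J = - mat 1" and JO: "J ** Omega ** transpose J = Omega"
  shows "transpose J ** Omega ** J = Omega"
proof -
  have "J ** (Omega ** transpose J) = Omega" using JO by (simp add: matrix_mul_assoc)
  then have "(- J) ** (J ** (Omega ** transpose J)) = - (J ** Omega)" by (simp add: mm_neg_l)
  then have OJt: "Omega ** transpose J = - (J ** Omega)"
    by (simp add: matrix_mul_assoc JJ mm_neg_l)
  have "transpose J = - (Omega ** (Omega ** transpose J))"
    by (simp add: matrix_mul_assoc Omega_Omega mm_neg_l)
  also have "\<dots> = Omega ** J ** Omega" by (simp add: OJt mm_neg_r matrix_mul_assoc)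
  finally have Jt: "transpose J = Omega ** J ** Omega" .
  have "transpose J ** Omega ** J = Omega ** J ** (Omega ** Omega) ** J" by (simp add: Jt matrix_mul_assoc)
  also have "\<dots> = Omega" by (simp add: Omega_Omega mm_neg_l mm_neg_r matrix_mul_assoc[symmetric] JJ)
  finally show ?thesis .
qed

lemma Gof_props:
  fixes J :: "'n::finite rmat"
  assumes J: "cplx_str bos J"
  shows "transpose (Gof bos J) = Gof bos J"
    "\<And>x. x \<noteq> 0 \<Longrightarrow> x \<bullet> (Gof bos J *v x) > 0"
    "J ** J = - mat 1"
    "transpose J ** Gof bos J ** J = Gof bos J"
proof -
  show JJ: "J ** J = - mat 1" using J by (simp add: cplx_str_def)
  show "transpose (Gof bos J) = Gof bos J" "\<And>x. x \<noteq> 0 \<Longrightarrow> x \<bullet> (Gof bos J *v x) > 0"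
     "transpose J ** Gof bos J ** J = Gof bos J"
  proof -
    consider "bos" | "\<not> bos" by blast
    then have "transpose (Gof bos J) = Gof bos J \<and> (\<forall>x. x \<noteq> 0 \<longrightarrow> x \<bullet> (Gof bos J *v x) > 0)
       \<and> transpose J ** Gof bos J ** J = Gof bos J"
    proof cases
      case 1
      have JO: "J ** Omega ** transpose J = Omega" and pd: "pos_def (- (J ** Omega))"
        using J 1 by (auto simp: cplx_str_def)
      have JtOJ: "transpose J ** Omega ** J = Omega" by (rule bos_JtOJ[OF JJ JO])
      have G: "Gof bos J = - (Omega ** J)" using 1 by (simp add: Gof_def)
      have sym: "transpose (- (Omega ** J)) = - (Omega ** J)"
      proof -
        have "transpose (- (Omega ** J)) = transpose J ** Omega"
          by (simp add: transpose_neg matrix_transpose_mul Omega_transpose mm_neg_r)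
        also have "\<dots> = transpose J ** Omega ** J ** (- J)"
          by (simp add: matrix_mul_assoc[symmetric] mm_neg_r JJ)
        also have "\<dots> = - (Omega ** J)" by (simp add: JtOJ mm_neg_r)
        finally show ?thesis .
      qed
      have pos: "x \<bullet> (- (Omega ** J) *v x) > 0" if "x \<noteq> 0" for x
      proof -
        have eq: "- (Omega ** J) = Omega ** (- (J ** Omega)) ** transpose Omega"
          by (simp add: Omega_transpose mm_neg_l mm_neg_r matrix_mul_assoc[symmetric] Omega_Omega)
        have "x \<bullet> (- (Omega ** J) *v x) = x \<bullet> (Omega *v ((- (J ** Omega)) *v (transpose Omega *v x)))"
          by (subst eq) (simp only: matrix_vector_mul_assoc matrix_mul_assoc)
        also have "\<dots> = (transpose Omega *v x) \<bullet> ((- (J ** Omega)) *v (transpose Omega *v x))"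
          by (rule dot_mv)
        finally have "x \<bullet> (- (Omega ** J) *v x) = (transpose Omega *v x) \<bullet> ((- (J ** Omega)) *v (transpose Omega *v x))" .
        moreover have "transpose Omega *v x \<noteq> 0"
        proof
          assume "transpose Omega *v x = 0"
          then have "Omega *v (transpose Omega *v x) = 0" by simp
          then show False using that by (simp add: matrix_vector_mul_assoc Omega_transpose mm_neg_r Omega_Omega mv_neg mv_neg_right)
        qed
        ultimately show ?thesis using pd by (simp add: pos_def_def)
      qed
      have "transpose J ** (- (Omega ** J)) ** J = - (transpose J ** Omega ** J ** J)"
        by (simp add: mm_neg_l mm_neg_r matrix_mul_assoc)
      also have "\<dots> = - (Omega ** J)" by (simp add: JtOJ)
      finally show ?thesis using G sym pos by simp
    next
      case 2
      then have "transpose J ** J = mat 1" using J by (simp add: cplx_str_def)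
      then show ?thesis using 2 by (simp add: Gof_def inner_gt_zero_iff)
    qed
    then show "transpose (Gof bos J) = Gof bos J" "\<And>x. x \<noteq> 0 \<Longrightarrow> x \<bullet> (Gof bos J *v x) > 0"
     "transpose J ** Gof bos J ** J = Gof bos J" by auto
  qed
qed

lemma adapted_Gof:
  assumes J: "cplx_str bos J" and "transpose A ** Gof bos J = Gof bos J ** A" "A ** J = J ** A"
  shows "adapted (Gof bos J) J A"
  using Gof_props[OF J] assms(2,3) by unfold_locales auto

lemma ex_Sadm_J:
  assumes J: "cplx_str bos J"
  shows "\<exists>S. Sadm J S"
proof -
  have "transpose (0::'a rmat) = 0" by (simp add: vec_eq_iff transpose_def)
  then have "adapted (Gof bos J) J 0" by (intro adapted_Gof[OF J]) auto
  then show ?thesis by (rule adapted.ex_Sadm)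
qed

lemma sgn_complex: "sgn (z::complex) = z / complex_of_real (cmod z)"
  by (simp add: sgn_div_norm divide_inverse scaleR_conv_of_real mult.commute)

lemma phi_sgn: "phi J M = sgn (detbar J (C_of J M))"
  by (simp add: phi_def sgn_complex)

lemma C_commJ:
  assumes JJ: "J ** J = - mat 1"
  shows "commJ J (C_of J M)"
proof -
  have "C_of J M ** J = (1/2) *\<^sub>R (M ** J + J ** M)"
    by (simp add: C_of_def mm_simps matrix_mul_assoc[symmetric] JJ)
  moreover have "J ** C_of J M = (1/2) *\<^sub>R (M ** J + J ** M)"
    by (simp add: C_of_def mm_simps matrix_mul_assoc JJ)
  ultimately show ?thesis by (simp add: commJ_def)
qed

lemma C_right:
  assumes "commJ J u"
  shows "C_of J (X ** u) = C_of J X ** u"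
proof -
  have "J ** (X ** u) ** J = J ** X ** J ** u" using assms by (simp add: commJ_def matrix_mul_assoc[symmetric])
  then show ?thesis by (simp add: C_of_def mm_simps)
qed

lemma C_left:
  assumes "commJ J u"
  shows "C_of J (u ** X) = u ** C_of J X"
proof -
  have "J ** (u ** X) ** J = u ** (J ** X ** J)" using assms by (simp add: commJ_def matrix_mul_assoc)
  then show ?thesis by (simp add: C_of_def mm_simps)
qed

lemma C_one:
  assumes JJ: "J ** J = - mat 1"
  shows "C_of J (mat 1) = mat 1"
  by (simp add: C_of_def JJ scaleR_2[symmetric] mm_simps)

lemma Ginv:
  assumes J: "cplx_str bos J"
  shows "Gof bos J ** (if bos then - (J ** Omega) else mat 1) = mat 1"
    "invertible (Gof bos J)"
    "matrix_inv (Gof bos J) = (if bos then - (J ** Omega) else mat 1)"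
proof -
  have JJ: "J ** J = - mat 1" using J by (simp add: cplx_str_def)
  show 1: "Gof bos J ** (if bos then - (J ** Omega) else mat 1) = mat 1"
    by (cases bos) (simp_all add: Gof_def mm_neg_l mm_neg_r matrix_mul_assoc JJ,
        simp add: matrix_mul_assoc[symmetric] mm_neg_r mm_neg_l JJ Omega_Omega)
  show "invertible (Gof bos J)" "matrix_inv (Gof bos J) = (if bos then - (J ** Omega) else mat 1)"
    using minv_unique[OF 1] by auto
qed

lemma U_props:
  assumes J: "cplx_str bos J" and u: "u \<in> U_N bos J"
  shows "commJ J u" "transpose u ** Gof bos J ** u = Gof bos J"
proof -
  show cu: "commJ J u" using u by (simp add: U_N_def commJ_def)
  show "transpose u ** Gof bos J ** u = Gof bos J"
  proof (cases bos)
    case False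
    then show ?thesis using u by (simp add: U_N_def in_G_def Gof_def)
  next
    case True
    have uO: "u ** Omega ** transpose u = Omega" using u True by (simp add: U_N_def in_G_def)
    have "u ** (Omega ** transpose u ** (- Omega)) = mat 1"
      using uO by (simp add: matrix_mul_assoc mm_neg_r Omega_Omega)
    then have "Omega ** transpose u ** (- Omega) ** u = mat 1" by (rule inv_from_right)
    then have "Omega ** (Omega ** transpose u ** (- Omega) ** u) = Omega" by simp
    then have uOu: "transpose u ** Omega ** u = Omega"
      by (simp add: matrix_mul_assoc Omega_Omega mm_neg_l mm_neg_r)
    have "transpose u ** (- (Omega ** J)) ** u = - (transpose u ** Omega ** (J ** u))"
      by (simp add: mm_neg_l mm_neg_r matrix_mul_assoc)
    also have "\<dots> = - (transpose u ** Omega ** (u ** J))"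
      using cu by (simp add: commJ_def)
    also have "\<dots> = - (transpose u ** Omega ** u ** J)"
      by (simp add: matrix_mul_assoc)
    also have "\<dots> = - (Omega ** J)" by (simp add: uOu)
    finally show ?thesis using True by (simp add: Gof_def)
  qed
qed

lemma detbar_unit:
  assumes J: "cplx_str bos J" and u: "u \<in> U_N bos J"
  shows "cmod (detbar J u) = 1"
proof -
  obtain S where S: "Sadm J S" using ex_Sadm_J[OF J] by blast
  let ?G = "Gof bos J"
  note GP = Gof_props[OF J]
  note cu = U_props(1)[OF J u] and uGu = U_props(2)[OF J u]
  have Gi: "invertible ?G" by (rule Ginv(2)[OF J])
  let ?v = "matrix_inv ?G ** transpose u ** ?G"
  have cv: "commJ J ?v" by (rule detbar_adj(1)[OF S cu Gi GP(4) GP(3)])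
  have dv: "detbar J ?v = cnj (detbar J u)" by (rule detbar_adj(2)[OF S cu Gi GP(4) GP(3)])
  have "?v ** u = matrix_inv ?G ** (transpose u ** ?G ** u)" by (simp add: matrix_mul_assoc)
  also have "\<dots> = mat 1" by (simp add: uGu minv[OF Gi])
  finally have "detbar J (?v ** u) = 1" using detbar_one[OF S] by simp
  then have "cnj (detbar J u) * detbar J u = 1" using detbar_mult[OF S cv cu] dv by simp
  then have "detbar J u * cnj (detbar J u) = 1" by (simp add: mult.commute)
  then have "(cmod (detbar J u))^2 = 1" using complex_mod_mult_cnj[of "detbar J u"] by simp
  then show ?thesis using norm_ge_zero[of "detbar J u"] by (auto simp: power2_eq_1_iff)
qed

lemma part2:
  assumes J: "cplx_str bos J" and u1: "u1 \<in> U_N bos J" and u2: "u2 \<in> U_N bos J"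
  shows "phi J (u1 ** M ** u2) = phi J u1 * phi J M * phi J u2"
proof -
  obtain S where S: "Sadm J S" using ex_Sadm_J[OF J] by blast
  have JJ: "J ** J = - mat 1" using J by (simp add: cplx_str_def)
  note c1 = U_props(1)[OF J u1] and c2 = U_props(1)[OF J u2]
  have "C_of J (u1 ** M ** u2) = u1 ** C_of J M ** u2"
    by (simp add: C_right[OF c2] C_left[OF c1])
  then have "detbar J (C_of J (u1 ** M ** u2)) = detbar J u1 * detbar J (C_of J M) * detbar J u2"
    by (simp add: detbar_mult[OF S] commJ_mult c1 c2 C_commJ[OF JJ])
  moreover have "C_of J u1 = u1" using C_left[OF c1, of "mat 1"] C_one[OF JJ] by simp
  moreover have "C_of J u2 = u2" using C_left[OF c2, of "mat 1"] C_one[OF JJ] by simp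
  ultimately show ?thesis by (simp add: phi_sgn sgn_mult)
qed

lemma part_one:
  assumes J: "cplx_str bos J"
  shows "phi J (mat 1) = 1"
proof -
  obtain S where S: "Sadm J S" using ex_Sadm_J[OF J] by blast
  have JJ: "J ** J = - mat 1" using J by (simp add: cplx_str_def)
  show ?thesis by (simp add: phi_sgn C_one[OF JJ] detbar_one[OF S])
qed

lemma C_inv_formula:
  assumes J: "cplx_str bos J" and M: "in_G bos M"
  shows "C_of J (matrix_inv M) = matrix_inv (Gof bos J) ** transpose (C_of J M) ** Gof bos J"
proof (cases bos)
  case False
  have JtJ: "transpose J ** J = mat 1" and JJ: "J ** J = - mat 1" using J False by (auto simp: cplx_str_def)
  have Jt: "transpose J = - J"
  proof -
    have "transpose J = transpose J ** J ** (- J)" by (simp add: matrix_mul_assoc[symmetric] mm_neg_r JJ)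
    then show ?thesis by (simp add: JtJ)
  qed
  have MtM: "transpose M ** M = mat 1" using M False by (simp add: in_G_def)
  then have "M ** transpose M = mat 1" by (rule inv_from_right)
  then have Mi: "matrix_inv M = transpose M" by (rule minv_unique(1))
  have Gi: "matrix_inv (mat 1 :: 'a rmat) = mat 1" by (rule minv_unique(1)) simp
  show ?thesis using False
    by (simp add: Mi Gi Gof_def C_of_def transpose_scale transpose_diff matrix_transpose_mul Jt mm_simps
        matrix_mul_assoc)
next
  case True
  have JJ: "J ** J = - mat 1" and JO: "J ** Omega ** transpose J = Omega"
    using J True by (auto simp: cplx_str_def)
  have JtOJ: "transpose J ** Omega ** J = Omega" by (rule bos_JtOJ[OF JJ JO])
  have MO: "M ** Omega ** transpose M = Omega" using M True by (simp add: in_G_def)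
  have "M ** (- (Omega ** transpose M ** Omega)) = mat 1"
    using MO by (simp add: mm_neg_r matrix_mul_assoc Omega_Omega)
  then have Mi: "matrix_inv M = - (Omega ** transpose M ** Omega)" by (rule minv_unique(1))
  have Gi: "matrix_inv (Gof bos J) = - (J ** Omega)" using Ginv(3)[OF J] True by simp
  have G: "Gof bos J = - (Omega ** J)" using True by (simp add: Gof_def)
  have Gi': "matrix_inv (- (Omega ** J)) = - (J ** Omega)" using Gi G by simp
  let ?X = "Omega ** transpose M ** Omega"
  have L: "C_of J (matrix_inv M) = (1/2) *\<^sub>R (J ** ?X ** J - ?X)"
    by (simp add: Mi C_of_def mm_simps matrix_mul_assoc algebra_simps)
  have "matrix_inv (Gof bos J) ** transpose (C_of J M) ** Gof bos J
      = (1/2) *\<^sub>R ((J ** Omega) ** transpose M ** (Omega ** J)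
         - (J ** Omega) ** (transpose J ** transpose M ** transpose J) ** (Omega ** J))"
    unfolding G by (simp add: Gi' C_of_def transpose_scale transpose_diff matrix_transpose_mul mm_simps matrix_mul_assoc scaleR_diff_right)
  also have "(J ** Omega) ** (transpose J ** transpose M ** transpose J) ** (Omega ** J)
      = (J ** Omega ** transpose J) ** transpose M ** (transpose J ** Omega ** J)"
    by (simp add: matrix_mul_assoc)
  also have "\<dots> = ?X" by (simp add: JO JtOJ)
  also have "(J ** Omega) ** transpose M ** (Omega ** J) = J ** ?X ** J" by (simp add: matrix_mul_assoc)
  finally show ?thesis using L by simp
qed

lemma part3:
  assumes J: "cplx_str bos J" and M: "in_G bos M"
  shows "phi J (matrix_inv M) = cnj (phi J M)"
proof -
  obtain S where S: "Sadm J S" using ex_Sadm_J[OF J] by blast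
  note GP = Gof_props[OF J]
  have cC: "commJ J (C_of J M)" by (rule C_commJ[OF GP(3)])
  have "detbar J (C_of J (matrix_inv M)) = cnj (detbar J (C_of J M))"
    unfolding C_inv_formula[OF J M] by (rule detbar_adj(2)[OF S cC Ginv(2)[OF J] GP(4) GP(3)])
  then show ?thesis by (simp add: phi_def)
qed

lemma mu_nonneg_bos:
  fixes G K :: "'n::finite rmat"
  assumes Gpos: "\<And>y. y \<noteq> 0 \<Longrightarrow> y \<bullet> (G *v y) > 0" and gx: "x \<bullet> (G *v x) = 1"
    and ev: "(K ** K) *v x = mu *\<^sub>R x" and KG: "transpose K ** G = G ** K"
  shows "mu \<ge> 0"
proof -
  have "mu = x \<bullet> (G *v (mu *\<^sub>R x))" using gx by (simp add: matrix_vector_mult_scaleR)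
  also have "\<dots> = x \<bullet> ((G ** K) *v (K *v x))" by (simp add: ev[symmetric] matrix_vector_mul_assoc matrix_mul_assoc)
  also have "\<dots> = x \<bullet> ((transpose K ** G) *v (K *v x))" by (simp only: KG)
  also have "\<dots> = x \<bullet> (transpose K *v (G *v (K *v x)))" by (simp only: matrix_vector_mul_assoc matrix_mul_assoc)
  also have "\<dots> = (K *v x) \<bullet> (G *v (K *v x))" by (simp only: dot_mv2[symmetric])
  also have "\<dots> \<ge> 0" using Gpos[of "K *v x"] by (cases "K *v x = 0") auto
  finally show ?thesis .
qed

lemma ctil_pos_ferm:
  fixes K :: "'n::finite rmat"
  assumes gx: "x \<bullet> x = 1"
    and ev: "(K ** K) *v x = mu *\<^sub>R x" and Kt: "transpose K = - K"
    and eigc: "\<forall>l. is_ceigenvalue K l \<longrightarrow> cmod l < pi / 2"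
  shows "ctil mu > 0"
proof -
  have "mu = x \<bullet> (mu *\<^sub>R x)" using gx by simp
  also have "\<dots> = x \<bullet> (K *v (K *v x))" by (simp add: ev[symmetric] matrix_vector_mul_assoc)
  also have "\<dots> = (transpose K *v x) \<bullet> (K *v x)" by (rule dot_mv)
  also have "\<dots> = - ((K *v x) \<bullet> (K *v x))" by (simp add: Kt mv_neg)
  finally have mu: "mu = - ((K *v x) \<bullet> (K *v x))" .
  then have mule: "mu \<le> 0" by simp
  show ?thesis
  proof (cases "mu = 0")
    case True then show ?thesis using ctil_cos[of 0] by simp
  next
    case False
    then have mun: "mu < 0" using mule by simp
    define w where "w = sqrt (- mu)"
    have wp: "w > 0" using mun by (simp add: w_def)
    have w2: "w * w = - mu" using mun by (simp add: w_def)
    define v where "v = (\<chi> a. complex_of_real ((K *v x) $ a) + \<i> * complex_of_real (w * x $ a))"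
    have KK: "K *v (K *v x) = mu *\<^sub>R x" using ev by (simp only: matrix_vector_mul_assoc)
    have mvc: "(M *v y) $ a = (\<Sum>b\<in>UNIV. M $ a $ b * y $ b)" for M :: "'n rmat" and y a
      by (simp add: matrix_vector_mult_def)
    have KKx: "(\<Sum>b\<in>UNIV. K $ a $ b * (K *v x) $ b) = mu * x $ a" for a
      using mvc[of K "K *v x" a] KK by simp
    have Kx: "(K *v x) $ a = (\<Sum>b\<in>UNIV. K $ a $ b * x $ b)" for a
      by (simp add: matrix_vector_mult_def)
    have "cmat K *v v = (\<i> * complex_of_real w) *s v"
    proof -
      have "(cmat K *v v) $ a = ((\<i> * complex_of_real w) *s v) $ a" for a
      proof -
        have "(cmat K *v v) $ a = (\<Sum>b\<in>UNIV. complex_of_real (K $ a $ b) *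
           (complex_of_real ((K *v x) $ b) + \<i> * complex_of_real (w * x $ b)))"
          by (simp add: cmat_def v_def matrix_vector_mult_def)
        also have "\<dots> = complex_of_real (mu * x $ a) + \<i> * complex_of_real (w * (K *v x) $ a)"
          by (simp add: complex_eq_iff Re_sum Im_sum KKx[symmetric] Kx sum_distrib_left mult_ac)
        also have "\<dots> = ((\<i> * complex_of_real w) *s v) $ a"
          using w2 by (simp add: v_def complex_eq_iff algebra_simps) (simp add: mult.assoc[symmetric])
        finally show ?thesis .
      qed
      then show ?thesis by (simp add: vec_eq_iff)
    qed
    moreover have "v \<noteq> 0"
    proof
      assume v0: "v = 0"
      have "x \<noteq> 0" using gx by auto
      then obtain a where "x $ a \<noteq> 0" by (auto simp: vec_eq_iff)
      moreover have "Im (v $ a) = w * x $ a" by (simp add: v_def)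
      ultimately show False using v0 wp by simp
    qed
    ultimately have "is_ceigenvalue K (\<i> * complex_of_real w)" by (auto simp: is_ceigenvalue_def)
    then have "cmod (\<i> * complex_of_real w) < pi / 2" using eigc by blast
    then have "w < pi / 2" using wp by (simp add: norm_mult)
    then have "cos w > 0" using wp by (intro cos_gt_zero_pi) auto
    then show ?thesis using ctil_cos[OF mule] by (simp add: w_def)
  qed
qed

lemma part1:
  fixes J K u M :: "'n::finite rmat"
  assumes J: "cplx_str bos J" and K: "K \<in> u_perp bos J" and u: "u \<in> U_N bos J" and M: "M = mexp K ** u"
    and eigc: "\<not> bos \<longrightarrow> (\<forall>l. is_ceigenvalue K l \<longrightarrow> cmod l < pi / 2)"
  shows "phi J M = detbar J u"
proof -
  let ?G = "Gof bos J"
  note GP = Gof_props[OF J]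
  have JJ: "J ** J = - mat 1" by (rule GP(3))
  have KJ: "K ** J = - (J ** K)" and Kg: "in_g bos K" using K by (auto simp: u_perp_def)
  have JK: "J ** K = - (K ** J)" by (simp add: KJ)
  have KG_b: "transpose K ** ?G = ?G ** K" if b: bos
  proof -
    have KO: "K ** Omega + Omega ** transpose K = 0" using Kg b by (simp add: in_g_def)
    then have OKt: "Omega ** transpose K = - (K ** Omega)" by (simp add: eq_neg_iff_add_eq_0 add.commute)
    have "transpose K = - (Omega ** (Omega ** transpose K))"
      by (simp add: matrix_mul_assoc Omega_Omega mm_neg_l)
    also have "\<dots> = Omega ** K ** Omega" by (simp add: OKt mm_neg_r matrix_mul_assoc)
    finally have Kt: "transpose K = Omega ** K ** Omega" .
    have "transpose K ** ?G = Omega ** K ** J"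
      using b by (simp add: Gof_def Kt mm_neg_r mm_neg_l matrix_mul_assoc[symmetric] Omega_Omega mm_rule[OF Omega_Omega])
    moreover have "?G ** K = Omega ** K ** J"
      using b by (simp add: Gof_def mm_neg_l mm_neg_r matrix_mul_assoc[symmetric] JK)
    ultimately show ?thesis by simp
  qed
  have Kt_f: "transpose K = - K" if nb: "\<not> bos" using Kg nb by (simp add: in_g_def)
  have AG: "transpose (K ** K) ** ?G = ?G ** (K ** K)"
  proof (cases bos)
    case True
    have "transpose (K ** K) ** ?G = transpose K ** (transpose K ** ?G)"
      by (simp add: matrix_transpose_mul matrix_mul_assoc)
    also have "\<dots> = ?G ** (K ** K)" by (simp add: KG_b[OF True] matrix_mul_assoc)
    finally show ?thesis .
  next
    case False
    then show ?thesis by (simp add: Gof_def matrix_transpose_mul Kt_f mm_neg_l mm_neg_r)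
  qed
  have AJ: "(K ** K) ** J = J ** (K ** K)"
  proof -
    have "(K ** K) ** J = K ** (K ** J)" by (simp add: matrix_mul_assoc)
    also have "\<dots> = - ((K ** J) ** K)" by (simp add: KJ mm_neg_r matrix_mul_assoc)
    also have "\<dots> = J ** (K ** K)" by (simp add: KJ mm_neg_l matrix_mul_assoc)
    finally show ?thesis .
  qed
  interpret ad: adapted ?G J "K ** K" by (rule adapted_Gof[OF J AG AJ])
  have fr: "\<exists>f :: 'n \<Rightarrow> real^('n+'n). (\<forall>j. \<exists>mu. (K ** K) *v f j = mu *\<^sub>R f j) \<and>
     (\<forall>i j. f i \<bullet> (?G *v f j) = (if i = j then 1 else 0) \<and> f i \<bullet> (?G *v (J *v f j)) = 0)"
    using ad.adapted_frame unfolding ad.g_def .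
  then obtain f :: "'n \<Rightarrow> real^('n+'n)" where fe: "\<forall>j. \<exists>mu. (K ** K) *v f j = mu *\<^sub>R f j"
    and fo: "\<forall>i j. f i \<bullet> (?G *v f j) = (if i = j then 1 else 0) \<and> f i \<bullet> (?G *v (J *v f j)) = 0"
    by blast
  obtain mu where mu: "\<And>j. (K ** K) *v f j = mu j *\<^sub>R f j" using fe by metis
  let ?P = "pmat J f"
  have Pi: "invertible ?P" and SP: "Sadm J (matrix_inv ?P)" using ad.pmat_inv[unfolded ad.g_def, OF fo] by auto
  define d where "d c = mu (case c of Inl j \<Rightarrow> j | Inr j \<Rightarrow> j)" for c
  have colev: "(K ** K) *v pcol J f c = d c *\<^sub>R pcol J f c" for c
  proof (cases c)
    case (Inl j)
    have "(K ** K) *v (J *v f j) = J *v ((K ** K) *v f j)" by (simp add: matrix_vector_mul_assoc AJ)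
    then show ?thesis using Inl by (simp add: pcol_def d_def mu matrix_vector_mult_scaleR)
  next
    case (Inr j)
    then show ?thesis by (simp add: pcol_def d_def mu)
  qed
  define C where "C = C_of J (mexp K)"
  define D :: "'n rmat" where "D = (\<chi> a b. if a = b then ctil (d a) else 0)"
  have CP: "C ** ?P = ?P ** D"
  proof (rule mat_eq_cols)
    fix c
    have "column c (C ** ?P) = ctil (d c) *\<^sub>R pcol J f c"
      unfolding C_def by (simp add: column_mm column_pmat C_eig[OF JK JJ colev])
    also have "\<dots> = column c (?P ** D)" by (simp add: D_def column_diag column_pmat)
    finally show "column c (C ** ?P) = column c (?P ** D)" .
  qed
  have SCP: "matrix_inv ?P ** C ** matrix_inv (matrix_inv ?P) = D"
  proof -
    have "matrix_inv ?P ** C ** matrix_inv (matrix_inv ?P) = matrix_inv ?P ** (C ** ?P)"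
      by (simp add: minv_inv(2)[OF Pi] matrix_mul_assoc)
    also have "\<dots> = D" by (simp add: CP matrix_mul_assoc minv[OF Pi])
    finally show ?thesis .
  qed
  have cC: "commJ J C" unfolding C_def by (rule C_commJ[OF JJ])
  have "detbar J C = det (cpart D)" using detbar_eq[OF SP cC] SCP by simp
  also have "cpart D = (\<chi> i j. if i = j then complex_of_real (ctil (mu i)) else 0)"
    by (simp add: cpart_def vec_eq_iff D_def d_def)
  also have "det \<dots> = (\<Prod>i\<in>UNIV. complex_of_real (ctil (mu i)))" by (subst det_diagonal) auto
  also have "\<dots> = complex_of_real (\<Prod>i\<in>UNIV. ctil (mu i))" by simp
  finally have dC: "detbar J C = complex_of_real (\<Prod>i\<in>UNIV. ctil (mu i))" .
  have pos: "ctil (mu i) > 0" for i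
  proof (cases bos)
    case True
    have "f i \<bullet> (?G *v f i) = 1" using fo by simp
    then have "mu i \<ge> 0" using mu_nonneg_bos[OF GP(2) _ mu[of i] KG_b[OF True]] by simp
    then show ?thesis by (rule ctil_pos_nonneg)
  next
    case False
    have "f i \<bullet> f i = 1" using fo False by (simp add: Gof_def)
    then show ?thesis using ctil_pos_ferm[OF _ mu Kt_f[OF False]] eigc False by blast
  qed
  have rpos: "(\<Prod>i\<in>UNIV. ctil (mu i)) > 0" using pos by (simp add: prod_pos)
  note cu = U_props(1)[OF J u]
  have "phi J M = sgn (detbar J (C ** u))" by (simp add: phi_sgn M C_right[OF cu] C_def)
  also have "\<dots> = sgn (detbar J C) * sgn (detbar J u)" by (simp add: detbar_mult[OF SP cC cu] sgn_mult)
  also have "sgn (detbar J C) = 1" using rpos by (simp only: dC sgn_of_real) simp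
  also have "sgn (detbar J u) = detbar J u" by (simp add: sgn_complex detbar_unit[OF J u])
  finally show ?thesis by simp
qed

theorem lemma7:
  fixes bos :: bool and J :: "'n::finite rmat"
  assumes J: "cplx_str bos J"
  shows
    "(\<forall>M K u. in_G bos M \<and> phi_defined bos J M \<and>
        K \<in> u_perp bos J \<and> u \<in> U_N bos J \<and> M = mexp K ** u \<and>
        (\<not> bos \<longrightarrow> (\<forall>l. is_ceigenvalue K l \<longrightarrow> cmod l < pi / 2))
        \<longrightarrow> phi J M = detbar J u)
   \<and> phi J (mat 1) = 1
   \<and> (\<forall>M u1 u2. in_G bos M \<and> phi_defined bos J M \<and> u1 \<in> U_N bos J \<and> u2 \<in> U_N bos J
        \<longrightarrow> phi J (u1 ** M ** u2) = phi J u1 * phi J M * phi J u2)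
   \<and> (\<forall>M. in_G bos M \<and> phi_defined bos J M
        \<longrightarrow> phi J (matrix_inv M) = cnj (phi J M))"
proof (intro conjI allI impI)
  fix M K u :: "'n rmat"
  assume h: "in_G bos M \<and> phi_defined bos J M \<and>
        K \<in> u_perp bos J \<and> u \<in> U_N bos J \<and> M = mexp K ** u \<and>
        (\<not> bos \<longrightarrow> (\<forall>l. is_ceigenvalue K l \<longrightarrow> cmod l < pi / 2))"
  then show "phi J M = detbar J u" using part1[OF J] by blast
next
  show "phi J (mat 1) = 1" by (rule part_one[OF J])
next
  fix M u1 u2 :: "'n rmat"
  assume h: "in_G bos M \<and> phi_defined bos J M \<and> u1 \<in> U_N bos J \<and> u2 \<in> U_N bos J"
  then show "phi J (u1 ** M ** u2) = phi J u1 * phi J M * phi J u2" using part2[OF J] by blast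
next
  fix M :: "'n rmat"
  assume h: "in_G bos M \<and> phi_defined bos J M"
  then show "phi J (matrix_inv M) = cnj (phi J M)" using part3[OF J] by blast
qed

end
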